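(* Let $n\in\mathbb{N}$, $d\in\mathbb{N}_0$, $\boldsymbol{c}=(c_1,\ldots,c_d)\in(\mathbb{N}\setminus\{2\})^d$ and $\boldsymbol{z}=(z_0,\ldots,z_d)\in\mathbb{C}^{d+1}$ with $|z_j|<1$ for $j=0,\ldots,d$. Put $c_0=1$, $c_{d+1}=0$, $\delta_i=\delta(c_i)+\delta(c_{i+1})$ for $0\le i\le d$, and $k_{-1}=0$. Then $$G_n(\boldsymbol{c};\boldsymbol{z})=\frac{n\binom{2n}{n}}{2^{4n-2}}\sum_{n\geq k_0\geq k_1\geq\cdots\geq k_d\geq1}\binom{2n-1}{n-k_0}\prod_{i=0}^{d}\frac{(-1)^{k_i\delta_i}(2k_i-1)^{\delta_i-1}}{(2k_i-1)^2-z_i^2}V_{k_{i-1},k_i}^{\#}(\{1\}^{c_i-3}).$$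
   Context: For an index (finite sequence of positive integers) $\boldsymbol{s}=(s_1,\ldots,s_r)$ and $n\in\mathbb{N}$, the multiple $t$-harmonic star sum is $t^{\star}_n(\boldsymbol{s})=\sum_{n\geq k_1\geq\cdots\geq k_r\geq1}\prod_{j=1}^r(2k_j-1)^{-s_j}$, with $t^\star_n(\emptyset)=1$. $\{s\}^a$ denotes $s$ repeated $a$ times; for $a\le 0$, $\{1\}^{a}$ is the empty index. The generating function is $G_n(\boldsymbol{c};\boldsymbol{z})=\sum_{a_0,\ldots,a_d\geq0}t^{\star}_n(\{2\}^{a_0},c_1,\{2\}^{a_1},\ldots,c_d,\{2\}^{a_d})z_0^{2a_0}\cdots z_d^{2a_d}$. For $k,m\in\mathbb{N}_0$ let $\triangle(k,m)=0$ if $k=m$ and $1$ otherwise. For an index $\boldsymbol{s}=(s_1,\ldots,s_r)$: if $\boldsymbol{s}\ne\emptyset$ and $k\ge m$, $V^{\#}_{k,m}(\boldsymbol{s})=\frac{2k-1}{2m-1}\sum_{k\geq l_1\geq\cdots\geq l_r\geq m}\frac{2^{\triangle(k,l_1)+\triangle(l_1,l_2)+\cdots+\triangle(l_r,m)}}{(2l_1-1)^{s_1}\cdots(2l_r-1)^{s_r}}$; otherwise $V^{\#}_{k,m}(\boldsymbol{s})=\left(2\cdot\frac{2k-1}{2m-1}\right)^{\triangle(k,m)}$. For $c\in\mathbb{N}_0$, $\delta(c)=2$ if $c=0$, $\delta(c)=1$ if $c=1$, $\delta(c)=0$ if $c\ge3$. *)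

theory Defs
  imports "HOL-Analysis.Analysis"
begin

text \<open>Multiple t-harmonic star sum:
  t*_n(s_1,...,s_r) = sum over n >= k_1 >= ... >= k_r >= 1 of prod (2k_j-1)^(-s_j),
  written via the nested-sum recursion; t*_n(empty) = 1.\<close>
fun tstar :: "nat \<Rightarrow> nat list \<Rightarrow> real" where
  "tstar n [] = 1"
| "tstar n (s # ss) = (\<Sum>k=1..n. tstar k ss / (2 * real k - 1) ^ s)"

definition tri :: "nat \<Rightarrow> nat \<Rightarrow> nat" where
  "tri k m = (if k = m then 0 else 1)"

text \<open>Inner sum of V#: for s = (s_1..s_r), sum over k >= l_1 >= ... >= l_r >= m of
  2^(tri(k,l_1)+...+tri(l_r,m)) / prod (2 l_j - 1)^(s_j).\<close>
fun Vsum :: "nat \<Rightarrow> nat \<Rightarrow> nat list \<Rightarrow> real" where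
  "Vsum k m [] = 2 ^ tri k m"
| "Vsum k m (s # ss) = (\<Sum>l=m..k. 2 ^ tri k l / (2 * real l - 1) ^ s * Vsum l m ss)"

definition Vsharp :: "nat \<Rightarrow> nat \<Rightarrow> nat list \<Rightarrow> real" where
  "Vsharp k m s = (if s \<noteq> [] \<and> k \<ge> m
      then (2 * real k - 1) / (2 * real m - 1) * Vsum k m s
      else (2 * ((2 * real k - 1) / (2 * real m - 1))) ^ tri k m)"

definition delta :: "nat \<Rightarrow> nat" where
  "delta c = (if c = 0 then 2 else if c = 1 then 1 else 0)"

text \<open>The index ({2}^a_0, c_1, {2}^a_1, ..., c_d, {2}^a_d).\<close>
definition gidx :: "nat \<Rightarrow> (nat \<Rightarrow> nat) \<Rightarrow> (nat \<Rightarrow> nat) \<Rightarrow> nat list" where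
  "gidx d c a = replicate (a 0) 2 @ concat (map (\<lambda>i. c i # replicate (a i) 2) [1..<Suc d])"

definition gexps :: "nat \<Rightarrow> (nat \<Rightarrow> nat) set" where
  "gexps d = {a. \<forall>j>d. a j = 0}"

definition Gterm :: "nat \<Rightarrow> nat \<Rightarrow> (nat \<Rightarrow> nat) \<Rightarrow> (nat \<Rightarrow> complex) \<Rightarrow> (nat \<Rightarrow> nat) \<Rightarrow> complex" where
  "Gterm n d c z a = of_real (tstar n (gidx d c a)) * (\<Prod>j\<le>d. z j ^ (2 * a j))"

definition G :: "nat \<Rightarrow> nat \<Rightarrow> (nat \<Rightarrow> nat) \<Rightarrow> (nat \<Rightarrow> complex) \<Rightarrow> complex" where
  "G n d c z = infsum (Gterm n d c z) (gexps d)"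

definition chains :: "nat \<Rightarrow> nat \<Rightarrow> (nat \<Rightarrow> nat) set" where
  "chains n d = {k. (\<forall>i\<le>d. 1 \<le> k i \<and> k i \<le> n) \<and> (\<forall>i<d. k (Suc i) \<le> k i) \<and> (\<forall>i>d. k i = 0)}"

end

theory Submission
  imports Defs
begin


definition wr :: "nat \<Rightarrow> real" where "wr k = 2 * real k - 1"
definition rho :: "nat \<Rightarrow> real" where "rho m = 2 * real m * real (2*m choose m) / 16 ^ m"
definition Eb :: "nat \<Rightarrow> nat \<Rightarrow> real" where "Eb m k = rho m * real ((2*m-1) choose (m-k))"

declare binomial_Suc_Suc[simp del]

lemma wr_nz[simp]: "wr k \<noteq> 0"
  unfolding wr_def by (cases k) auto

lemma rho_rec: "rho (Suc M) * (8 * real M) = (2*real M + 1) * rho M"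
proof -
  define n where "n = 2*M"
  have a: "Suc M * (Suc (Suc n) choose Suc M) = Suc (Suc n) * (Suc n choose M)"
    by (rule Suc_times_binomial)
  have b: "Suc M * (Suc n choose Suc M) = Suc n * (n choose M)"
    by (rule Suc_times_binomial)
  have c: "(Suc n choose Suc M) = (Suc n choose M)"
  proof -
    have "Suc n - M = Suc M" unfolding n_def by simp
    then show ?thesis using binomial_symmetric[of M "Suc n"] unfolding n_def by simp
  qed
  have "Suc M * (Suc M * (Suc (Suc n) choose Suc M)) = Suc (Suc n) * (Suc M * (Suc n choose Suc M))"
    unfolding a c by (simp only: mult_ac)
  also have "\<dots> = Suc M * (2 * Suc n * (n choose M))"
    unfolding b unfolding n_def by simp
  finally have e: "Suc M * (Suc (Suc n) choose Suc M) = 2 * Suc n * (n choose M)"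
    by (simp only: mult_cancel1) simp
  have d: "real (Suc M) * real (Suc (Suc n) choose Suc M) = 2 * (2*real M+1) * real (n choose M)"
  proof -
    have "real (Suc M * (Suc (Suc n) choose Suc M)) = real (2 * Suc n * (n choose M))"
      using e by (simp only:)
    then show ?thesis unfolding n_def by (simp only: of_nat_mult) simp
  qed
  have r1: "rho (Suc M) = 2 * (real (Suc M) * real (Suc (Suc n) choose Suc M)) / (16 * 16^M)"
    unfolding rho_def n_def by (simp add: algebra_simps)
  have r2: "rho M = 2 * real M * real (n choose M) / 16^M"
    unfolding rho_def n_def by simp
  show ?thesis unfolding r1 r2 d by (simp add: field_simps)
qed

lemma wr_Suc: "wr (Suc M) = 2 * real M + 1" by (simp add: wr_def)

lemma Eb_rec:
  assumes "1 \<le> k" "k < m"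
  shows "Eb m k * (wr m ^ 2 - wr k ^ 2) = Eb (m - 1) k * wr m ^ 2"
proof -
  obtain M where m: "m = Suc M" using assms by (cases m) auto
  define j where "j = M - k"
  have kM: "k \<le> M" "1 \<le> M" using assms m by auto
  have e1: "(2*M+1 choose Suc j) * Suc j = (2*M+1) * (2*M choose j)"
  proof -
    have "Suc j * (Suc (2*M) choose Suc j) = Suc (2*M) * (2*M choose j)" by (rule Suc_times_binomial)
    then show ?thesis by (simp only: Suc_eq_plus1 mult.commute)
  qed
  have e2: "(2*M - j) * (2*M choose j) = 2*M * (2*M-1 choose j)"
    using binomial_absorb_comp[of "2*M" j] by simp
  have sj: "Suc j = M + 1 - k" "2*M - j = M + k" using kM unfolding j_def by auto
  have "real (2*M+1 choose Suc j) * real (Suc j) * real (2*M - j) = real (2*M+1) * real (2*M) * real (2*M-1 choose j)"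
  proof -
    have "(2*M+1 choose Suc j) * Suc j * (2*M - j) = ((2*M+1) * (2*M choose j)) * (2*M - j)"
      by (simp only: e1)
    also have "\<dots> = (2*M+1) * ((2*M - j) * (2*M choose j))" by (simp only: mult_ac)
    also have "\<dots> = (2*M+1) * (2*M * (2*M-1 choose j))" by (simp only: e2)
    also have "\<dots> = (2*M+1) * (2*M) * (2*M-1 choose j)" by (simp only: mult.assoc)
    finally have "real ((2*M+1 choose Suc j) * Suc j * (2*M - j)) = real ((2*M+1) * (2*M) * (2*M-1 choose j))"
      by (simp only:)
    then show ?thesis by (simp only: of_nat_mult)
  qed
  note P = this
  have R1: "real (Suc j) = real M + 1 - real k" "real (2*M - j) = real M + real k"
    using sj kM by auto
  have I: "m - k = Suc j" "2*m - 1 = 2*M+1" "M - k = j" "2*(m-1)-1 = 2*M-1" "m - 1 = M"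
    using m kM sj unfolding j_def by auto
  have X: "real (2*M+1 choose Suc j) * ((real M + 1 - real k) * (real M + real k)) = (2*real M+1) * (2*real M) * real (2*M-1 choose j)"
  proof -
    have R2: "real (2*M+1) = 2*real M+1" "real (2*M) = 2*real M" by simp_all
    show ?thesis using P unfolding R1 R2 by (simp only: mult.assoc)
  qed
  have W: "wr m ^ 2 - wr k ^ 2 = 4 * ((real M + 1 - real k) * (real M + real k))"
    using m by (simp add: wr_def power2_eq_square algebra_simps)
  have E1: "Eb m k = rho (Suc M) * real (2*M+1 choose Suc j)"
    unfolding Eb_def I(1) I(2) using m by simp
  have E2: "Eb (m-1) k = rho M * real (2*M-1 choose j)"
    unfolding Eb_def I(5) unfolding I(3) by (rule refl)
  have "Eb m k * (wr m ^ 2 - wr k ^ 2) = rho (Suc M) * 4 * (real (2*M+1 choose Suc j) * ((real M + 1 - real k) * (real M + real k)))"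
    unfolding E1 W by (simp only: mult_ac)
  also have "\<dots> = (rho (Suc M) * (8 * real M)) * (2*real M+1) * real (2*M-1 choose j)"
    unfolding X by (simp add: algebra_simps)
  also have "\<dots> = Eb (m - 1) k * wr m ^ 2"
    unfolding E2 unfolding m wr_Suc rho_rec by (simp add: power2_eq_square algebra_simps)
  finally show ?thesis .
qed



lemma sum_down_split:
  assumes "Suc j \<le> m"
  shows "(\<Sum>k=m - Suc j..m. f k) = f (m - Suc j) + (\<Sum>k=m - j..m. f k)"
proof -
  have "(\<Sum>k=m - Suc j..m. f k) = f (m - Suc j) + (\<Sum>k=Suc (m - Suc j)..m. f k)"
    by (rule sum.atLeast_Suc_atMost) simp
  moreover have "Suc (m - Suc j) = m - j" using assms by simp
  ultimately show ?thesis by simp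
qed

lemma binom_aux:
  fixes N j :: nat
  shows "real (N choose j) = real (j+1) * real (Suc N choose Suc j) / real (Suc N)"
    and "j \<le> N \<Longrightarrow> real (N choose Suc j) = (real N - real j) * real (Suc N choose Suc j) / real (Suc N)"
proof -
  have "Suc j * (Suc N choose Suc j) = Suc N * (N choose j)" by (rule Suc_times_binomial)
  then have "real (Suc j) * real (Suc N choose Suc j) = real (Suc N) * real (N choose j)"
    by (metis of_nat_mult)
  then show "real (N choose j) = real (j+1) * real (Suc N choose Suc j) / real (Suc N)"
    by (simp add: field_simps)
next
  assume "j \<le> N"
  have "(Suc N - Suc j) * (Suc N choose Suc j) = Suc N * ((Suc N - 1) choose Suc j)"
    by (rule binomial_absorb_comp)
  then have "real (Suc N - Suc j) * real (Suc N choose Suc j) = real (Suc N) * real (N choose Suc j)"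
    by (metis of_nat_mult diff_Suc_1)
  moreover have "real (Suc N - Suc j) = real N - real j" using \<open>j \<le> N\<close> by simp
  ultimately show "real (N choose Suc j) = (real N - real j) * real (Suc N choose Suc j) / real (Suc N)"
    by (simp add: field_simps)
qed

lemma TS:
  assumes "1 \<le> m" "j \<le> m"
  shows "(\<Sum>k=m-j..m. (-1)^(k-(m-j)) * real ((2*m-1) choose (m-k))) = real ((2*m-2) choose j)"
  using assms(2)
proof (induction j)
  case 0
  then show ?case by simp
next
  case (Suc j)
  define N where "N = 2*m-2"
  have N1: "2*m-1 = Suc N" using assms unfolding N_def by simp
  have "(\<Sum>k=m - Suc j..m. (-1)^(k-(m - Suc j)) * real ((2*m-1) choose (m-k)))
      = real ((2*m-1) choose Suc j) + (\<Sum>k=m-j..m. (-1)^(k-(m - Suc j)) * real ((2*m-1) choose (m-k)))"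
    using Suc.prems by (subst sum_down_split) auto
  also have "(\<Sum>k=m-j..m. (-1)^(k-(m - Suc j)) * real ((2*m-1) choose (m-k)))
      = - (\<Sum>k=m-j..m. (-1)^(k-(m-j)) * real ((2*m-1) choose (m-k)))"
    unfolding sum_negf[symmetric]
  proof (rule sum.cong)
    fix k assume "k \<in> {m-j..m}"
    then have "k - (m - Suc j) = Suc (k - (m-j))" using Suc.prems by auto
    then show "(-1)^(k-(m - Suc j)) * real ((2*m-1) choose (m-k)) = - ((-1)^(k-(m-j)) * real ((2*m-1) choose (m-k)))"
      by simp
  qed simp
  also have "\<dots> = - real (N choose j)" using Suc by (simp add: N_def)
  finally show ?case unfolding N1 N_def[symmetric] by (simp add: binomial_Suc_Suc)
qed

lemma S1:
  assumes "1 \<le> m" "j \<le> m"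
  shows "(\<Sum>k=m-j..m. real ((2*m-1) choose (m-k)) * wr k) = (2*real m-1) * real ((2*m-2) choose j)"
  using assms(2)
proof (induction j)
  case 0
  then show ?case using assms by (simp add: wr_def)
next
  case (Suc j)
  define N where "N = 2*m-2"
  have N1: "2*m-1 = Suc N" using assms unfolding N_def by simp
  have rN: "real N = 2 * real m - 2" using assms unfolding N_def by simp
  have jN: "j \<le> N" using Suc.prems assms unfolding N_def by simp
  have nzm: "real m * 2 - 1 \<noteq> 0" "2 * real m - 1 \<noteq> 0" using assms by linarith+
  have "(\<Sum>k=m - Suc j..m. real ((2*m-1) choose (m-k)) * wr k)
      = real ((2*m-1) choose Suc j) * wr (m - Suc j) + (2*real m-1) * real ((2*m-2) choose j)"
    using Suc by (subst sum_down_split) auto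
  also have "\<dots> = real (Suc N choose Suc j) * (2 * (real m - real j - 1) - 1) + (real N + 1) * real (N choose j)"
    using Suc.prems unfolding N1 N_def[symmetric] by (simp add: wr_def of_nat_diff rN)
  also have "\<dots> = (real N + 1) * real (N choose Suc j)"
    unfolding binom_aux(1)[of N j] binom_aux(2)[OF jN] using nzm by (simp add: field_simps rN)
  finally have F: "(\<Sum>k=m - Suc j..m. real ((2*m-1) choose (m-k)) * wr k) = (real N + 1) * real (N choose Suc j)" .
  show ?case using F rN unfolding N_def by (simp add: algebra_simps)
qed

lemma H:
  assumes "j < m"
  shows "(real m - 1) * (\<Sum>k=m-j..m. (-1)^(k-(m-j)) * real ((2*m-1) choose (m-k)) * wr k)
     = (2*real m - 1) * (real m - real j - 1) * real ((2*m-2) choose j)"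
  using assms
proof (induction j)
  case 0
  then show ?case by (simp add: wr_def algebra_simps)
next
  case (Suc j)
  define N where "N = 2*m-2"
  have N1: "2*m-1 = Suc N" using Suc.prems unfolding N_def by simp
  have rN: "real N = 2 * real m - 2" using Suc.prems unfolding N_def by simp
  have jN: "j \<le> N" using Suc.prems unfolding N_def by simp
  have nzm: "real m * 2 - 1 \<noteq> 0" "2 * real m - 1 \<noteq> 0" using Suc.prems by linarith+
  have "(\<Sum>k=m - Suc j..m. (-1)^(k-(m - Suc j)) * real ((2*m-1) choose (m-k)) * wr k)
      = real ((2*m-1) choose Suc j) * wr (m - Suc j) + (\<Sum>k=m-j..m. (-1)^(k-(m - Suc j)) * real ((2*m-1) choose (m-k)) * wr k)"
    using Suc.prems by (subst sum_down_split) auto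
  also have "(\<Sum>k=m-j..m. (-1)^(k-(m - Suc j)) * real ((2*m-1) choose (m-k)) * wr k)
      = - (\<Sum>k=m-j..m. (-1)^(k-(m-j)) * real ((2*m-1) choose (m-k)) * wr k)"
    unfolding sum_negf[symmetric]
  proof (rule sum.cong)
    fix k assume "k \<in> {m-j..m}"
    then have "k - (m - Suc j) = Suc (k - (m-j))" using Suc.prems by auto
    then show "(-1)^(k-(m - Suc j)) * real ((2*m-1) choose (m-k)) * wr k = - ((-1)^(k-(m-j)) * real ((2*m-1) choose (m-k)) * wr k)"
      by simp
  qed simp
  finally have S: "(\<Sum>k=m - Suc j..m. (-1)^(k-(m - Suc j)) * real ((2*m-1) choose (m-k)) * wr k)
     = real ((2*m-1) choose Suc j) * wr (m - Suc j) - (\<Sum>k=m-j..m. (-1)^(k-(m-j)) * real ((2*m-1) choose (m-k)) * wr k)"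
    by simp
  have E: "(real m - 1) * (\<Sum>k=m - Suc j..m. (-1)^(k-(m - Suc j)) * real ((2*m-1) choose (m-k)) * wr k)
     = (real m - 1) * (real ((2*m-1) choose Suc j) * wr (m - Suc j)) - (2*real m - 1) * (real m - real j - 1) * real ((2*m-2) choose j)"
    unfolding S right_diff_distrib using Suc.IH Suc.prems by (simp add: algebra_simps)
  have "(real m - 1) * (\<Sum>k=m - Suc j..m. (-1)^(k-(m - Suc j)) * real ((2*m-1) choose (m-k)) * wr k) = (real m - 1) * (real (Suc N choose Suc j) * (2 * (real m - real j - 1) - 1)) - (real N + 1) * (real m - real j - 1) * real (N choose j)"
    using Suc.prems unfolding E unfolding N1 N_def[symmetric] by (simp add: wr_def of_nat_diff rN)
  also have "\<dots> = (real N + 1) * (real m - real (Suc j) - 1) * real (N choose Suc j)"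
    unfolding binom_aux(1)[of N j] binom_aux(2)[OF jN] using nzm by (simp add: field_simps rN)
  finally have F: "(real m - 1) * (\<Sum>k=m - Suc j..m. (-1)^(k-(m - Suc j)) * real ((2*m-1) choose (m-k)) * wr k) = (real N + 1) * (real m - real (Suc j) - 1) * real (N choose Suc j)" .
  show ?case using F rN unfolding N_def by (simp add: algebra_simps)
qed



lemma sum_swap_tri:
  fixes a b :: nat
  shows "(\<Sum>k=a..b. \<Sum>l=a..k. f k l) = (\<Sum>l=a..b. \<Sum>k=l..b. f k l)"
proof -
  have "(\<Sum>k=a..b. \<Sum>l=a..k. f k l) = (\<Sum>k=a..b. \<Sum>l=a..b. if l \<le> k then f k l else 0)"
  proof (rule sum.cong)
    fix k assume "k \<in> {a..b}"
    then have e: "{l\<in>{a..b}. l \<le> k} = {a..k}" by auto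
    have "(\<Sum>l=a..b. if l \<le> k then f k l else 0) = sum (f k) {l\<in>{a..b}. l \<le> k}"
      by (rule sum.inter_filter[symmetric]) simp
    then show "(\<Sum>l=a..k. f k l) = (\<Sum>l=a..b. if l \<le> k then f k l else 0)"
      unfolding e by simp
  qed simp
  also have "\<dots> = (\<Sum>l=a..b. \<Sum>k=a..b. if l \<le> k then f k l else 0)"
    by (rule sum.swap)
  also have "\<dots> = (\<Sum>l=a..b. \<Sum>k=l..b. f k l)"
  proof (rule sum.cong)
    fix l assume "l \<in> {a..b}"
    then have e: "{k\<in>{a..b}. l \<le> k} = {l..b}" by auto
    have "(\<Sum>k=a..b. if l \<le> k then f k l else 0) = sum (\<lambda>k. f k l) {k\<in>{a..b}. l \<le> k}"
      by (rule sum.inter_filter[symmetric]) simp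
    then show "(\<Sum>k=a..b. if l \<le> k then f k l else 0) = (\<Sum>k=l..b. f k l)"
      unfolding e by simp
  qed simp
  finally show ?thesis .
qed

lemma absorb_real: "real (N choose j) * real (Suc N) = (real (Suc N) - real j) * real (Suc N choose j)"
proof (cases "j \<le> Suc N")
  case True
  have "(Suc N - j) * (Suc N choose j) = Suc N * ((Suc N - 1) choose j)"
    by (rule binomial_absorb_comp)
  then have "real (Suc N - j) * real (Suc N choose j) = real (Suc N) * real (N choose j)"
    by (metis of_nat_mult diff_Suc_1)
  then show ?thesis using True by (simp add: of_nat_diff algebra_simps)
next
  case False
  then show ?thesis by (simp add: binomial_eq_0)
qed

lemma sum_tri_split:
  fixes f :: "nat \<Rightarrow> real"
  assumes "l \<le> m"
  shows "(\<Sum>k=l..m. f k * 2 ^ tri k l) = 2 * (\<Sum>k=l..m. f k) - f l"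
proof -
  have "(\<Sum>k=l..m. f k * 2 ^ tri k l) = f l + (\<Sum>k=Suc l..m. f k * 2)"
    using assms by (subst sum.atLeast_Suc_atMost) (auto simp: tri_def intro!: sum.cong)
  moreover have "(\<Sum>k=l..m. f k) = f l + (\<Sum>k=Suc l..m. f k)"
    using assms by (subst sum.atLeast_Suc_atMost) auto
  ultimately show ?thesis by (simp add: sum_distrib_right[symmetric] algebra_simps)
qed

lemma Tprime:
  assumes "1 \<le> l" "l \<le> m"
  shows "(\<Sum>k=l..m. real ((2*m-1) choose (m-k)) * (-1)^(k-l) * 2 ^ tri k l)
     = wr l / wr m * real ((2*m-1) choose (m-l))"
proof -
  have "(\<Sum>k=l..m. real ((2*m-1) choose (m-k)) * (-1)^(k-l)) = real ((2*m-2) choose (m-l))"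
    using TS[of m "m-l"] assms by (simp add: mult.commute)
  then have "(\<Sum>k=l..m. real ((2*m-1) choose (m-k)) * (-1)^(k-l) * 2 ^ tri k l)
      = 2 * real ((2*m-2) choose (m-l)) - real ((2*m-1) choose (m-l))"
    using sum_tri_split[OF assms(2), of "\<lambda>k. real ((2*m-1) choose (m-k)) * (-1)^(k-l)"] by simp
  also have "\<dots> = wr l / wr m * real ((2*m-1) choose (m-l))"
  proof -
    define N where "N = 2*m-2"
    have N1: "2*m-1 = Suc N" using assms unfolding N_def by simp
    have rN: "real (Suc N) = 2 * real m - 1" using assms unfolding N_def by simp
    have A: "real (N choose (m-l)) * real (Suc N) = (real (Suc N) - real (m-l)) * real (Suc N choose (m-l))"
      by (rule absorb_real)
    have nz: "2 * real m - 1 \<noteq> 0" using assms by linarith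
    show ?thesis unfolding N1 N_def[symmetric] using A nz assms unfolding rN
      by (simp add: wr_def of_nat_diff field_simps)
  qed
  finally show ?thesis .
qed

lemma Vsharp_nil: "Vsharp k m [] = (2 * (wr k / wr m)) ^ tri k m"
  unfolding Vsharp_def wr_def by simp

lemma Vsum_Vsharp:
  assumes "m \<le> l"
  shows "Vsum l m s = wr m / wr l * Vsharp l m s"
proof (cases s)
  case Nil
  then show ?thesis by (cases "l = m") (auto simp: Vsharp_nil tri_def field_simps)
next
  case (Cons x xs)
  have "Vsharp l m s = wr l / wr m * Vsum l m s"
    using assms Cons by (simp add: Vsharp_def wr_def)
  then show ?thesis by (simp add: field_simps)
qed

lemma Vsharp_cons:
  assumes "k' \<le> k"
  shows "Vsharp k k' (x # s) = (\<Sum>l=k'..k. 2 ^ tri k l * wr k / (wr l ^ x * wr l) * Vsharp l k' s)"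
proof -
  have "Vsharp k k' (x # s) = wr k / wr k' * (\<Sum>l=k'..k. 2 ^ tri k l / wr l ^ x * Vsum l k' s)"
    using assms by (simp add: Vsharp_def wr_def)
  also have "\<dots> = (\<Sum>l=k'..k. 2 ^ tri k l * wr k / (wr l ^ x * wr l) * Vsharp l k' s)"
    unfolding sum_distrib_left
    by (rule sum.cong) (auto simp: Vsum_Vsharp field_simps)
  finally show ?thesis .
qed

lemma KI3:
  assumes "1 \<le> k'" "k' \<le> m"
  shows "(\<Sum>k=k'..m. real ((2*m-1) choose (m-k)) * (-1)^(k+k') * Vsharp k k' (replicate j 1) / wr k)
     = real ((2*m-1) choose (m-k')) / wr m ^ (j+1)"
proof (induction j)
  case 0
  have "(\<Sum>k=k'..m. real ((2*m-1) choose (m-k)) * (-1)^(k+k') * Vsharp k k' [] / wr k)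
      = (\<Sum>k=k'..m. real ((2*m-1) choose (m-k)) * (-1)^(k-k') * 2 ^ tri k k') / wr k'"
    unfolding sum_divide_distrib
  proof (rule sum.cong)
    fix k assume k: "k \<in> {k'..m}"
    then have s: "(-1::real)^(k+k') = (-1)^(k-k')"
    proof -
      have e: "k + k' = (k - k') + 2*k'" using k by auto
      show ?thesis unfolding e power_add power_mult by simp
    qed
    show "real ((2*m-1) choose (m-k)) * (-1)^(k+k') * Vsharp k k' [] / wr k =
          real ((2*m-1) choose (m-k)) * (-1)^(k-k') * 2 ^ tri k k' / wr k'"
      unfolding Vsharp_nil s by (cases "k = k'") (auto simp: tri_def)
  qed simp
  also have "\<dots> = real ((2*m-1) choose (m-k')) / wr m"
    unfolding Tprime[OF assms] by simp
  finally show ?case by simp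
next
  case (Suc j)
  let ?C = "\<lambda>k. real ((2*m-1) choose (m-k))"
  let ?V = "\<lambda>l. Vsharp l k' (replicate j 1)"
  have "(\<Sum>k=k'..m. ?C k * (-1)^(k+k') * Vsharp k k' (replicate (Suc j) 1) / wr k)
      = (\<Sum>k=k'..m. \<Sum>l=k'..k. ?C k * (-1)^(k+k') * 2 ^ tri k l / wr l ^ 2 * ?V l)"
    by (rule sum.cong) (auto simp: Vsharp_cons sum_distrib_left sum_divide_distrib power2_eq_square intro!: sum.cong)
  also have "\<dots> = (\<Sum>l=k'..m. \<Sum>k=l..m. ?C k * (-1)^(k+k') * 2 ^ tri k l / wr l ^ 2 * ?V l)"
    by (rule sum_swap_tri)
  also have "\<dots> = (\<Sum>l=k'..m. (-1)^(l+k') * ?V l / wr l ^ 2 * (\<Sum>k=l..m. ?C k * (-1)^(k-l) * 2 ^ tri k l))"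
  proof (rule sum.cong)
    fix l assume l: "l \<in> {k'..m}"
    show "(\<Sum>k=l..m. ?C k * (-1)^(k+k') * 2 ^ tri k l / wr l ^ 2 * ?V l) =
          (-1)^(l+k') * ?V l / wr l ^ 2 * (\<Sum>k=l..m. ?C k * (-1)^(k-l) * 2 ^ tri k l)"
      unfolding sum_distrib_left
    proof (rule sum.cong)
      fix k assume k: "k \<in> {l..m}"
      have e: "k + k' = (k - l) + (l + k')" using k l by auto
      have "(-1::real)^(k+k') = (-1)^(k-l) * (-1)^(l+k')" by (subst e) (simp only: power_add)
      then show "?C k * (-1)^(k+k') * 2 ^ tri k l / wr l ^ 2 * ?V l =
          (-1)^(l+k') * ?V l / wr l ^ 2 * (?C k * (-1)^(k-l) * 2 ^ tri k l)" by simp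
    qed simp
  qed simp
  also have "\<dots> = (\<Sum>l=k'..m. (-1)^(l+k') * ?V l / wr l ^ 2 * (wr l / wr m * ?C l))"
  proof (rule sum.cong)
    fix l assume l: "l \<in> {k'..m}"
    then have "1 \<le> l" "l \<le> m" using assms by auto
    then show "(-1)^(l+k') * ?V l / wr l ^ 2 * (\<Sum>k=l..m. ?C k * (-1)^(k-l) * 2 ^ tri k l) =
        (-1)^(l+k') * ?V l / wr l ^ 2 * (wr l / wr m * ?C l)" by (simp only: Tprime)
  qed simp
  also have "\<dots> = (\<Sum>l=k'..m. ?C l * (-1)^(l+k') * ?V l / wr l) / wr m"
    unfolding sum_divide_distrib by (rule sum.cong) (auto simp: power2_eq_square field_simps)
  also have "\<dots> = ?C k' / wr m ^ (Suc j + 1)" unfolding Suc.IH by simp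
  finally show ?case .
qed

lemma KI1:
  assumes "1 \<le> k'" "k' \<le> m"
  shows "(\<Sum>k=k'..m. real ((2*m-1) choose (m-k)) * wr k' * Vsharp k k' [])
     = wr m * real ((2*m-1) choose (m-k'))"
proof -
  let ?C = "\<lambda>k. real ((2*m-1) choose (m-k))"
  have "(\<Sum>k=k'..m. ?C k * wr k' * Vsharp k k' []) = (\<Sum>k=k'..m. (?C k * wr k) * 2 ^ tri k k')"
    by (rule sum.cong) (auto simp: Vsharp_nil tri_def)
  also have "\<dots> = 2 * (\<Sum>k=k'..m. ?C k * wr k) - ?C k' * wr k'"
    by (rule sum_tri_split[OF assms(2)])
  also have "(\<Sum>k=k'..m. ?C k * wr k) = (2*real m-1) * real ((2*m-2) choose (m-k'))"
    using S1[of m "m-k'"] assms by simp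
  also have "2 * ((2*real m-1) * real ((2*m-2) choose (m-k'))) - ?C k' * wr k' = wr m * ?C k'"
  proof -
    define N where "N = 2*m-2"
    have N1: "2*m-1 = Suc N" using assms unfolding N_def by simp
    have rN: "real (Suc N) = 2 * real m - 1" using assms unfolding N_def by simp
    have A: "real (N choose (m-k')) * real (Suc N) = (real (Suc N) - real (m-k')) * real (Suc N choose (m-k'))"
      by (rule absorb_real)
    show ?thesis unfolding N1 N_def[symmetric] using A assms unfolding rN
      by (simp add: wr_def of_nat_diff algebra_simps)
  qed
  finally show ?thesis .
qed



lemma Eb_rec':
  assumes "1 \<le> k" "k \<le> p"
  shows "Eb p k = Eb (Suc p) k - Eb (Suc p) k * wr k ^ 2 / wr (Suc p) ^ 2"
proof -
  have "Eb (Suc p) k * (wr (Suc p) ^ 2 - wr k ^ 2) = Eb (Suc p - 1) k * wr (Suc p) ^ 2"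
    using assms by (intro Eb_rec) auto
  then show ?thesis by (simp add: field_simps)
qed

lemma DL:
  fixes g :: "nat \<Rightarrow> real"
  assumes "1 \<le> k'" "k' \<le> Suc p"
  shows "(\<Sum>k=k'..Suc p. Eb (Suc p) k * g k) = (\<Sum>k=k'..p. Eb p k * g k)
           + (\<Sum>k=k'..Suc p. Eb (Suc p) k * g k * wr k ^ 2 / wr (Suc p) ^ 2)"
proof -
  have s1: "(\<Sum>k=k'..Suc p. Eb (Suc p) k * g k) = (\<Sum>k=k'..p. Eb (Suc p) k * g k) + Eb (Suc p) (Suc p) * g (Suc p)"
    using assms by (simp add: sum.cl_ivl_Suc)
  have s2: "(\<Sum>k=k'..Suc p. Eb (Suc p) k * g k * wr k ^ 2 / wr (Suc p) ^ 2) = (\<Sum>k=k'..p. Eb (Suc p) k * g k * wr k ^ 2 / wr (Suc p) ^ 2) + Eb (Suc p) (Suc p) * g (Suc p)"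
    using assms by (simp add: sum.cl_ivl_Suc)
  have s3: "(\<Sum>k=k'..p. Eb p k * g k) = (\<Sum>k=k'..p. Eb (Suc p) k * g k - Eb (Suc p) k * g k * wr k ^ 2 / wr (Suc p) ^ 2)"
  proof (rule sum.cong)
    fix k assume "k \<in> {k'..p}"
    then have "1 \<le> k" "k \<le> p" using assms by auto
    then show "Eb p k * g k = Eb (Suc p) k * g k - Eb (Suc p) k * g k * wr k ^ 2 / wr (Suc p) ^ 2"
      by (subst Eb_rec') (auto simp: algebra_simps)
  qed simp
  show ?thesis unfolding s1 s2 s3 sum_subtractf by simp
qed

lemma ES:
  assumes "1 \<le> k" "k \<le> m"
  shows "(\<Sum>l=k..m. Eb l k / wr l ^ 2) = Eb m k / wr k ^ 2"
  using assms(2)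
proof (induction m rule: dec_induct)
  case base
  then show ?case by simp
next
  case (step m)
  have "(\<Sum>l=k..Suc m. Eb l k / wr l ^ 2) = Eb m k / wr k ^ 2 + Eb (Suc m) k / wr (Suc m) ^ 2"
    using step by (simp add: sum.cl_ivl_Suc)
  also have "\<dots> = Eb (Suc m) k / wr k ^ 2"
    using Eb_rec'[OF assms(1) step(1)] by (simp add: field_simps)
  finally show ?case .
qed

lemma CORE3:
  assumes "1 \<le> k'"
  shows "(-1)^k' * (\<Sum>q=k'..p. Eb q k' / wr q ^ (j+3))
       = (\<Sum>k=k'..p. Eb p k * ((-1)^k * Vsharp k k' (replicate j 1) / wr k ^ 3))"
proof (induction p)
  case 0
  then show ?case using assms by simp
next
  case (Suc p)
  show ?case
  proof (cases "k' \<le> Suc p")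
    case False
    then show ?thesis by simp
  next
    case True
    let ?g = "\<lambda>k. (-1)^k * Vsharp k k' (replicate j 1) / wr k ^ 3"
    let ?C = "\<lambda>k. real ((2*Suc p-1) choose (Suc p-k))"
    have L: "(-1)^k' * (\<Sum>q=k'..Suc p. Eb q k' / wr q ^ (j+3))
        = (-1)^k' * (\<Sum>q=k'..p. Eb q k' / wr q ^ (j+3)) + (-1)^k' * Eb (Suc p) k' / wr (Suc p) ^ (j+3)"
      using True by (simp add: sum.cl_ivl_Suc algebra_simps)
    have K: "(\<Sum>k=k'..Suc p. ?C k * (-1)^k * Vsharp k k' (replicate j 1) / wr k)
        = (-1)^k' * (?C k' / wr (Suc p) ^ (j+1))"
    proof -
      have "(\<Sum>k=k'..Suc p. ?C k * (-1)^k * Vsharp k k' (replicate j 1) / wr k)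
          = (-1)^k' * (\<Sum>k=k'..Suc p. ?C k * (-1)^(k+k') * Vsharp k k' (replicate j 1) / wr k)"
        unfolding sum_distrib_left
      proof (rule sum.cong)
        fix k
        have "(-1::real)^k' * (-1)^(k+k') = (-1)^k * ((-1)^k' * (-1)^k')"
          by (simp add: power_add)
        also have "\<dots> = (-1)^k" by (simp add: power_add[symmetric] power_mult[symmetric] mult_2[symmetric])
        finally have e: "(-1::real)^k' * (-1)^(k+k') = (-1)^k" .
        show "?C k * (-1)^k * Vsharp k k' (replicate j 1) / wr k =
              (-1)^k' * (?C k * (-1)^(k+k') * Vsharp k k' (replicate j 1) / wr k)"
          by (simp add: e[symmetric] algebra_simps)
      qed simp
      also have "\<dots> = (-1)^k' * (?C k' / wr (Suc p) ^ (j+1))"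
        using KI3[OF assms True, of j] by simp
      finally show ?thesis .
    qed
    have R: "(\<Sum>k=k'..Suc p. Eb (Suc p) k * ?g k) = (\<Sum>k=k'..p. Eb p k * ?g k)
           + (\<Sum>k=k'..Suc p. Eb (Suc p) k * ?g k * wr k ^ 2 / wr (Suc p) ^ 2)"
      by (rule DL[OF assms True])
    have R2: "(\<Sum>k=k'..Suc p. Eb (Suc p) k * ?g k * wr k ^ 2 / wr (Suc p) ^ 2)
        = rho (Suc p) / wr (Suc p) ^ 2 * (\<Sum>k=k'..Suc p. ?C k * (-1)^k * Vsharp k k' (replicate j 1) / wr k)"
      unfolding sum_distrib_left
      by (rule sum.cong) (auto simp: Eb_def power2_eq_square power3_eq_cube field_simps)
    have pw: "\<And>x::real. x ^ (j+3) = x ^ j * x * x * x" by (simp add: power_add power3_eq_cube)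
    show ?thesis unfolding L R R2 K Suc.IH
      by (simp add: Eb_def field_simps pw power2_eq_square)
  qed
qed

lemma CORE1:
  assumes "1 \<le> k'"
  shows "(\<Sum>q=k'..p. Eb q k' / wr q)
       = wr k' * (\<Sum>k=k'..p. Eb p k * (Vsharp k k' [] / wr k ^ 2))"
proof (induction p)
  case 0
  then show ?case using assms by simp
next
  case (Suc p)
  show ?case
  proof (cases "k' \<le> Suc p")
    case False
    then show ?thesis by simp
  next
    case True
    let ?g = "\<lambda>k. Vsharp k k' [] / wr k ^ 2"
    let ?C = "\<lambda>k. real ((2*Suc p-1) choose (Suc p-k))"
    have L: "(\<Sum>q=k'..Suc p. Eb q k' / wr q)
        = (\<Sum>q=k'..p. Eb q k' / wr q) + Eb (Suc p) k' / wr (Suc p)"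
      using True by (simp add: sum.cl_ivl_Suc)
    have R: "(\<Sum>k=k'..Suc p. Eb (Suc p) k * ?g k) = (\<Sum>k=k'..p. Eb p k * ?g k)
           + (\<Sum>k=k'..Suc p. Eb (Suc p) k * ?g k * wr k ^ 2 / wr (Suc p) ^ 2)"
      by (rule DL[OF assms True])
    have R2: "wr k' * (\<Sum>k=k'..Suc p. Eb (Suc p) k * ?g k * wr k ^ 2 / wr (Suc p) ^ 2)
        = rho (Suc p) / wr (Suc p) ^ 2 * (\<Sum>k=k'..Suc p. ?C k * wr k' * Vsharp k k' [])"
      unfolding sum_distrib_left
      by (rule sum.cong) (auto simp: Eb_def power2_eq_square field_simps)
    have K: "(\<Sum>k=k'..Suc p. ?C k * wr k' * Vsharp k k' []) = wr (Suc p) * ?C k'"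
      by (rule KI1[OF assms True])
    show ?thesis unfolding L R distrib_left R2 K Suc.IH
      by (simp add: Eb_def power2_eq_square field_simps)
  qed
qed

lemma BASE:
  assumes "1 \<le> m"
  shows "(\<Sum>k=1..m. Eb m k * (-4 * (-1)^k / wr k)) = 1"
  using assms
proof (induction m rule: dec_induct)
  case base
  then show ?case by (simp add: Eb_def rho_def wr_def)
next
  case (step m)
  let ?g = "\<lambda>k. -4 * (-1)^k / wr k"
  have R: "(\<Sum>k=1..Suc m. Eb (Suc m) k * ?g k) = (\<Sum>k=1..m. Eb m k * ?g k)
           + (\<Sum>k=1..Suc m. Eb (Suc m) k * ?g k * wr k ^ 2 / wr (Suc m) ^ 2)"
    by (rule DL) auto
  have Z: "(\<Sum>k=1..Suc m. real ((2*Suc m-1) choose (Suc m-k)) * (-1)^k * wr k) = 0"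
  proof -
    have "(real (Suc m) - 1) * (\<Sum>k=Suc m - m..Suc m. (-1)^(k-(Suc m - m)) * real ((2*Suc m-1) choose (Suc m-k)) * wr k)
       = (2*real (Suc m) - 1) * (real (Suc m) - real m - 1) * real ((2*Suc m-2) choose m)"
      by (rule H) simp
    then have "(\<Sum>k=1..Suc m. (-1)^(k-1) * real ((2*Suc m-1) choose (Suc m-k)) * wr k) = 0"
      using step(1) by simp
    then have "- (\<Sum>k=1..Suc m. (-1)^(k-1) * real ((2*Suc m-1) choose (Suc m-k)) * wr k) = 0" by simp
    also have "- (\<Sum>k=1..Suc m. (-1)^(k-1) * real ((2*Suc m-1) choose (Suc m-k)) * wr k)
       = (\<Sum>k=1..Suc m. real ((2*Suc m-1) choose (Suc m-k)) * (-1)^k * wr k)"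
      unfolding sum_negf[symmetric]
    proof (rule sum.cong)
      fix k assume "k \<in> {1..Suc m}"
      then have "k = Suc (k - 1)" by auto
      then have "(-1::real)^k = - ((-1)^(k-1))" by (metis power_Suc mult_minus1)
      then show "- ((-1)^(k-1) * real ((2*Suc m-1) choose (Suc m-k)) * wr k) = real ((2*Suc m-1) choose (Suc m-k)) * (-1)^k * wr k"
        by simp
    qed simp
    finally show ?thesis .
  qed
  have R2: "(\<Sum>k=1..Suc m. Eb (Suc m) k * ?g k * wr k ^ 2 / wr (Suc m) ^ 2)
      = -4 * rho (Suc m) / wr (Suc m) ^ 2 * (\<Sum>k=1..Suc m. real ((2*Suc m-1) choose (Suc m-k)) * (-1)^k * wr k)"
    unfolding sum_distrib_left
    by (rule sum.cong) (auto simp: Eb_def power2_eq_square field_simps)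
  show ?case unfolding R R2 Z step(3) by simp
qed



definition wc :: "nat \<Rightarrow> complex" where "wc k = 2 * of_nat k - 1"

lemma wc_of_real: "wc k = of_real (wr k)"
  by (simp add: wc_def wr_def)

lemma wc_nz[simp]: "wc k \<noteq> 0"
  by (simp add: wc_of_real)

lemma norm_wc: "1 \<le> k \<Longrightarrow> norm (wc k) = 2 * real k - 1"
  unfolding wc_of_real norm_of_real wr_def by simp

definition Xop :: "(nat \<Rightarrow> complex) \<Rightarrow> nat \<Rightarrow> complex" where
  "Xop f m = (\<Sum>l=1..m. f l / wc l ^ 2)"

lemma has_sum_finsum:
  fixes f :: "'i \<Rightarrow> 'a \<Rightarrow> complex"
  assumes "finite I" "\<And>i. i \<in> I \<Longrightarrow> (f i has_sum s i) A"
  shows "((\<lambda>x. \<Sum>i\<in>I. f i x) has_sum (\<Sum>i\<in>I. s i)) A"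
  using assms
proof (induction I rule: finite_induct)
  case empty
  then show ?case by simp
next
  case (insert i I)
  then show ?case by (simp add: has_sum_add)
qed

lemma Xop_expand:
  assumes "\<And>p. 1 \<le> p \<Longrightarrow> u p = (\<Sum>k=1..p. of_real (Eb p k) * \<psi> k)"
  shows "1 \<le> m \<Longrightarrow> Xop u m = (\<Sum>k=1..m. of_real (Eb m k) * (\<psi> k / wc k ^ 2))"
proof -
  assume m: "1 \<le> m"
  have "Xop u m = (\<Sum>l=1..m. \<Sum>k=1..l. of_real (Eb l k) * \<psi> k / wc l ^ 2)"
    unfolding Xop_def by (rule sum.cong) (auto simp: assms sum_divide_distrib)
  also have "\<dots> = (\<Sum>k=1..m. \<Sum>l=k..m. of_real (Eb l k) * \<psi> k / wc l ^ 2)"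
    by (rule sum_swap_tri)
  also have "\<dots> = (\<Sum>k=1..m. of_real (Eb m k) * (\<psi> k / wc k ^ 2))"
  proof (rule sum.cong)
    fix k assume k: "k \<in> {1..m}"
    have "(\<Sum>l=k..m. of_real (Eb l k) * \<psi> k / wc l ^ 2) = \<psi> k * of_real (\<Sum>l=k..m. Eb l k / wr l ^ 2)"
      unfolding of_real_sum sum_distrib_left by (rule sum.cong) (auto simp: wc_of_real)
    also have "\<dots> = \<psi> k * of_real (Eb m k / wr k ^ 2)" using k by (simp add: ES)
    finally show "(\<Sum>l=k..m. of_real (Eb l k) * \<psi> k / wc l ^ 2) = of_real (Eb m k) * (\<psi> k / wc k ^ 2)"
      by (simp add: wc_of_real)
  qed simp
  finally show ?thesis .
qed

lemma Xop_pow_expand: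
  assumes "\<And>p. 1 \<le> p \<Longrightarrow> u p = (\<Sum>k=1..p. of_real (Eb p k) * \<psi> k)"
  shows "1 \<le> m \<Longrightarrow> (Xop ^^ x) u m = (\<Sum>k=1..m. of_real (Eb m k) * (\<psi> k / (wc k ^ 2) ^ x))"
proof (induction x arbitrary: m)
  case 0
  then show ?case using assms by simp
next
  case (Suc x)
  have "(Xop ^^ Suc x) u m = Xop ((Xop ^^ x) u) m" by simp
  also have "\<dots> = (\<Sum>k=1..m. of_real (Eb m k) * ((\<psi> k / (wc k ^ 2) ^ x) / wc k ^ 2))"
    by (rule Xop_expand[OF Suc.IH]) (use Suc.prems in auto)
  finally show ?case by (simp add: field_simps)
qed

lemma has_sum_geom:
  fixes q :: complex
  assumes "norm q < 1"
  shows "((\<lambda>x. q ^ x) has_sum (1 / (1 - q))) UNIV"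
proof (rule norm_summable_imp_has_sum)
  show "summable (\<lambda>n. norm (q ^ n))"
    using assms by (simp add: norm_power summable_geometric)
  show "(\<lambda>n. q ^ n) sums (1 / (1 - q))"
    using geometric_sums[OF assms] by simp
qed

lemma GL:
  assumes z: "norm z < 1" and m: "1 \<le> m"
    and u: "\<And>p. 1 \<le> p \<Longrightarrow> u p = (\<Sum>k=1..p. of_real (Eb p k) * \<psi> k)"
  shows "((\<lambda>x. (z^2)^x * (Xop ^^ x) u m) has_sum
           (\<Sum>k=1..m. of_real (Eb m k) * \<psi> k * wc k ^ 2 / (wc k ^ 2 - z ^ 2))) UNIV"
proof -
  have eq: "(z^2)^x * (Xop ^^ x) u m = (\<Sum>k=1..m. of_real (Eb m k) * \<psi> k * (z^2 / wc k ^ 2) ^ x)" for x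
  proof -
    have e: "(Xop ^^ x) u m = (\<Sum>k=1..m. of_real (Eb m k) * (\<psi> k / (wc k ^ 2) ^ x))"
      by (rule Xop_pow_expand[OF u m])
    show ?thesis unfolding e sum_distrib_left
      by (rule sum.cong) (auto simp: power_divide field_simps)
  qed
  have hs: "((\<lambda>x. of_real (Eb m k) * \<psi> k * (z^2 / wc k ^ 2) ^ x) has_sum
        (of_real (Eb m k) * \<psi> k * wc k ^ 2 / (wc k ^ 2 - z ^ 2))) UNIV" if k: "k \<in> {1..m}" for k
  proof -
    have nk: "1 \<le> norm (wc k)" using k norm_wc[of k] by auto
    have "norm (z^2 / wc k ^ 2) = norm z ^ 2 / norm (wc k) ^ 2"
      by (simp add: norm_divide norm_power)
    also have "\<dots> \<le> norm z ^ 2"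
      using nk by (simp add: divide_le_eq) (metis mult_le_cancel_left1 norm_ge_zero one_le_power power2_eq_square zero_le_power2 nk dual_order.trans less_eq_real_def mult.commute)
    also have "\<dots> < 1" using z by (simp add: power_less_one_iff abs_square_less_1)
    finally have q: "norm (z^2 / wc k ^ 2) < 1" .
    have "wc k ^ 2 - z ^ 2 \<noteq> 0"
    proof
      assume "wc k ^ 2 - z ^ 2 = 0"
      then have "norm (wc k ^ 2) = norm (z ^ 2)" by simp
      then have "norm (wc k) ^ 2 = norm z ^ 2" by (simp add: norm_power)
      then show False using nk z
        by (metis abs_norm_cancel linorder_not_le order_less_le_trans power2_eq_iff_nonneg norm_ge_zero)
    qed
    then have "1 / (1 - z^2 / wc k ^ 2) = wc k ^ 2 / (wc k ^ 2 - z ^ 2)"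
      by (simp add: field_simps)
    then show ?thesis using has_sum_cmult_right[OF has_sum_geom[OF q], of "of_real (Eb m k) * \<psi> k"]
      by (simp add: field_simps)
  qed
  show ?thesis unfolding eq by (rule has_sum_finsum) (use hs in auto)
qed

lemma tstar_replicate:
  "of_real (tstar m (replicate x 2 @ t)) * \<zeta> = (Xop ^^ x) (\<lambda>p. of_real (tstar p t) * \<zeta>) m"
proof (induction x arbitrary: m)
  case 0
  then show ?case by simp
next
  case (Suc x)
  have "of_real (tstar m (replicate (Suc x) 2 @ t)) * \<zeta>
      = (\<Sum>k=1..m. (of_real (tstar k (replicate x 2 @ t)) * \<zeta>) / wc k ^ 2)"
    by (simp add: sum_distrib_right wc_of_real wr_def sum_divide_distrib)
  also have "\<dots> = Xop ((Xop ^^ x) (\<lambda>p. of_real (tstar p t) * \<zeta>)) m"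
    unfolding Xop_def Suc.IH ..
  finally show ?case by simp
qed

lemma Xop_has_sum:
  assumes "\<And>p. 1 \<le> p \<Longrightarrow> ((\<lambda>b. F b p) has_sum H p) B"
  shows "1 \<le> m \<Longrightarrow> ((\<lambda>b. (Xop ^^ x) (F b) m) has_sum (Xop ^^ x) H m) B"
proof (induction x arbitrary: m)
  case 0
  then show ?case using assms by simp
next
  case (Suc x)
  have "((\<lambda>b. \<Sum>l=1..m. (Xop ^^ x) (F b) l / wc l ^ 2) has_sum (\<Sum>l=1..m. (Xop ^^ x) H l / wc l ^ 2)) B"
    by (rule has_sum_finsum) (auto intro!: has_sum_divide_const Suc.IH)
  moreover have "\<And>f. (Xop ^^ Suc x) f m = (\<Sum>l=1..m. (Xop ^^ x) f l / wc l ^ 2)"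
    by (simp add: Xop_def)
  ultimately show ?case by simp
qed



definition Fct :: "nat \<Rightarrow> nat \<Rightarrow> complex \<Rightarrow> nat \<Rightarrow> nat \<Rightarrow> complex" where
  "Fct cp cn zz kp k = (let \<delta> = delta cp + delta cn; w = 2 * of_nat k - (1::complex)
     in (- 1) ^ (k * \<delta>) * w powi (int \<delta> - 1) / (w ^ 2 - zz ^ 2) * of_real (Vsharp kp k (replicate (cp - 3) 1)))"

lemma powi_aux:
  fixes w :: complex
  assumes "w \<noteq> 0"
  shows "w powi (int n - 1) = w ^ n / w" "w powi (int (Suc n) - 1) = w ^ n"
proof -
  show "w powi (int n - 1) = w ^ n / w"
    using power_int_diff[of w "int n" 1] assms by simp
  have "int (Suc n) - 1 = int n" by simp
  then show "w powi (int (Suc n) - 1) = w ^ n" by simp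
qed

lemma wc_sq_nz:
  assumes "norm zz < 1" "1 \<le> k"
  shows "wc k ^ 2 - zz ^ 2 \<noteq> 0"
proof
  assume "wc k ^ 2 - zz ^ 2 = 0"
  then have "norm (wc k ^ 2) = norm (zz ^ 2)" by simp
  then have "norm (wc k) ^ 2 = norm zz ^ 2" by (simp add: norm_power)
  moreover have "1 \<le> norm (wc k)" using assms norm_wc[of k] by auto
  ultimately show False using assms
    by (metis abs_norm_cancel linorder_not_le order_less_le_trans power2_eq_iff_nonneg norm_ge_zero)
qed

lemma delta_cases: "c = 1 \<or> 3 \<le> c \<Longrightarrow> (c = 1 \<and> delta c = 1) \<or> (3 \<le> c \<and> delta c = 0)"
  unfolding delta_def by auto

lemma Fct_lead:
  assumes "1 \<le> k"
  shows "Fct 1 cn zz 0 k = (-1)^(k*(1 + delta cn)) * wc k ^ delta cn / (wc k ^ 2 - zz ^ 2) * (-2 / wc k)"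
proof -
  have V: "Vsharp 0 k (replicate (1 - 3) 1) = -2 / wr k"
    using assms by (simp add: Vsharp_def tri_def wr_def)
  have d: "delta 1 + delta cn = Suc (delta cn)" by (simp add: delta_def)
  show ?thesis unfolding Fct_def Let_def V d wc_def[symmetric]
    using powi_aux(2)[OF wc_nz[of k], of "delta cn"] by (simp add: wc_of_real)
qed

lemma Fct_gen:
  shows "Fct cp cn zz kp k = (-1)^(k*(delta cp + delta cn)) * (wc k ^ (delta cp + delta cn) / wc k) / (wc k ^ 2 - zz ^ 2)
           * of_real (Vsharp kp k (replicate (cp - 3) 1))"
  unfolding Fct_def Let_def wc_def[symmetric]
  using powi_aux(1)[OF wc_nz[of k], of "delta cp + delta cn"] by simp

lemma PK:
  assumes c1: "c1 = 1 \<or> 3 \<le> c1" and z0: "norm z0 < 1" and k': "1 \<le> k'"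
  shows "Fct 1 cn z1 0 k' * (\<Sum>q=k'..p. of_real (Eb q k') / wc q ^ c1)
       = (\<Sum>k=k'..p. of_real (Eb p k) * (Fct 1 c1 z0 0 k * (wc k ^ 2 - z0 ^ 2) / wc k ^ 2) * Fct c1 cn z1 k k')"
proof -
  let ?dn = "delta cn"
  define \<kappa> where "\<kappa> = (-1)^(k'*?dn) * wc k' ^ ?dn / (wc k' ^ 2 - z1 ^ 2)"
  have L0: "Fct 1 cn z1 0 k' = \<kappa> * (-1)^k' * (-2 / wc k')"
    unfolding Fct_lead[OF k'] \<kappa>_def by (simp add: algebra_simps power_add)
  from delta_cases[OF c1] show ?thesis
  proof
    assume "c1 = 1 \<and> delta c1 = 1"
    then have c: "c1 = 1" "delta c1 = 1" by auto
    have A: "Fct 1 c1 z0 0 k * (wc k ^ 2 - z0 ^ 2) / wc k ^ 2 = -2 / wc k ^ 2" if "k \<in> {k'..p}" for k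
    proof -
      have k: "1 \<le> k" using that k' by auto
      have "(-1::complex)^(k*(1+1)) = 1" by (simp add: power_mult)
      then show ?thesis unfolding c Fct_lead[OF k]
        using wc_sq_nz[OF z0 k] by (simp add: delta_def field_simps power2_eq_square)
    qed
    have B: "Fct c1 cn z1 k k' = \<kappa> * (-1)^k' * of_real (Vsharp k k' [])" for k
      unfolding Fct_gen \<kappa>_def c by (simp add: delta_def field_simps power_add)
    have C: "(\<Sum>q=k'..p. Eb q k' / wr q) = wr k' * (\<Sum>k=k'..p. Eb p k * (Vsharp k k' [] / wr k ^ 2))"
      by (rule CORE1[OF k'])
    have "(\<Sum>q=k'..p. of_real (Eb q k') / wc q ^ c1) = of_real (\<Sum>q=k'..p. Eb q k' / wr q)"
      unfolding c by (simp add: wc_of_real)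
    also have "\<dots> = wc k' * (\<Sum>k=k'..p. of_real (Eb p k) * (of_real (Vsharp k k' []) / wc k ^ 2))"
      unfolding C by (simp add: wc_of_real)
    finally have D: "(\<Sum>q=k'..p. of_real (Eb q k') / wc q ^ c1) = wc k' * (\<Sum>k=k'..p. of_real (Eb p k) * (of_real (Vsharp k k' []) / wc k ^ 2))" .
    have "(\<Sum>k=k'..p. of_real (Eb p k) * (Fct 1 c1 z0 0 k * (wc k ^ 2 - z0 ^ 2) / wc k ^ 2) * Fct c1 cn z1 k k')
        = (\<Sum>k=k'..p. (\<kappa> * (-1)^k' * (-2)) * (of_real (Eb p k) * (of_real (Vsharp k k' []) / wc k ^ 2)))"
    proof (rule sum.cong)
      fix k assume k: "k \<in> {k'..p}"
      show "of_real (Eb p k) * (Fct 1 c1 z0 0 k * (wc k ^ 2 - z0 ^ 2) / wc k ^ 2) * Fct c1 cn z1 k k' =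
         (\<kappa> * (-1)^k' * (-2)) * (of_real (Eb p k) * (of_real (Vsharp k k' []) / wc k ^ 2))"
        unfolding A[OF k] B by (simp add: field_simps)
    qed simp
    also have "\<dots> = Fct 1 cn z1 0 k' * (\<Sum>q=k'..p. of_real (Eb q k') / wc q ^ c1)"
      unfolding D L0 sum_distrib_left[symmetric] by (simp add: field_simps)
    finally show ?thesis ..
  next
    assume "3 \<le> c1 \<and> delta c1 = 0"
    then have c: "3 \<le> c1" "delta c1 = 0" by auto
    define j where "j = c1 - 3"
    have cj: "c1 = j + 3" using c unfolding j_def by simp
    have A: "Fct 1 c1 z0 0 k * (wc k ^ 2 - z0 ^ 2) / wc k ^ 2 = -2 * (-1)^k / wc k ^ 3" if "k \<in> {k'..p}" for k
    proof -
      have k: "1 \<le> k" using that k' by auto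
      show ?thesis unfolding Fct_lead[OF k] c(2)
        using wc_sq_nz[OF z0 k] by (simp add: field_simps power2_eq_square power3_eq_cube)
    qed
    have B: "Fct c1 cn z1 k k' = \<kappa> / wc k' * of_real (Vsharp k k' (replicate j 1))" for k
      unfolding Fct_gen \<kappa>_def c(2) j_def by (simp add: field_simps)
    have C: "(-1)^k' * (\<Sum>q=k'..p. Eb q k' / wr q ^ (j+3))
       = (\<Sum>k=k'..p. Eb p k * ((-1)^k * Vsharp k k' (replicate j 1) / wr k ^ 3))"
      by (rule CORE3[OF k'])
    have "(-1)^k' * (\<Sum>q=k'..p. of_real (Eb q k') / wc q ^ c1) = of_real ((-1)^k' * (\<Sum>q=k'..p. Eb q k' / wr q ^ (j+3)))"
      unfolding cj by (simp add: wc_of_real)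
    also have "\<dots> = (\<Sum>k=k'..p. of_real (Eb p k) * ((-1)^k * of_real (Vsharp k k' (replicate j 1)) / wc k ^ 3))"
      unfolding C by (simp add: wc_of_real)
    finally have D: "(-1)^k' * (\<Sum>q=k'..p. of_real (Eb q k') / wc q ^ c1) = (\<Sum>k=k'..p. of_real (Eb p k) * ((-1)^k * of_real (Vsharp k k' (replicate j 1)) / wc k ^ 3))" .
    have "(\<Sum>k=k'..p. of_real (Eb p k) * (Fct 1 c1 z0 0 k * (wc k ^ 2 - z0 ^ 2) / wc k ^ 2) * Fct c1 cn z1 k k')
        = (\<Sum>k=k'..p. (\<kappa> * (-2) / wc k') * (of_real (Eb p k) * ((-1)^k * of_real (Vsharp k k' (replicate j 1)) / wc k ^ 3)))"
    proof (rule sum.cong)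
      fix k assume k: "k \<in> {k'..p}"
      show "of_real (Eb p k) * (Fct 1 c1 z0 0 k * (wc k ^ 2 - z0 ^ 2) / wc k ^ 2) * Fct c1 cn z1 k k' =
         (\<kappa> * (-2) / wc k') * (of_real (Eb p k) * ((-1)^k * of_real (Vsharp k k' (replicate j 1)) / wc k ^ 3))"
        unfolding A[OF k] B by (simp add: field_simps)
    qed simp
    also have "\<dots> = (\<kappa> * (-2) / wc k') * ((-1)^k' * (\<Sum>q=k'..p. of_real (Eb q k') / wc q ^ c1))"
      by (subst D) (simp only: sum_distrib_left)
    also have "\<dots> = Fct 1 cn z1 0 k' * (\<Sum>q=k'..p. of_real (Eb q k') / wc q ^ c1)"
      unfolding L0 by (simp add: field_simps)
    finally show ?thesis ..
  qed
qed

lemma UEXP: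
  assumes c1: "c1 = 1 \<or> 3 \<le> c1" and z0: "norm z0 < 1"
  shows "(\<Sum>q=1..p. (\<Sum>k'=1..q. 2 * of_real (Eb q k') * Fct 1 cn z1 0 k' * A k') / wc q ^ c1)
       = (\<Sum>k=1..p. of_real (Eb p k) * (2 * Fct 1 c1 z0 0 k * (wc k ^ 2 - z0 ^ 2) / wc k ^ 2
              * (\<Sum>k'=1..k. Fct c1 cn z1 k k' * A k')))"
proof -
  have "(\<Sum>q=1..p. (\<Sum>k'=1..q. 2 * of_real (Eb q k') * Fct 1 cn z1 0 k' * A k') / wc q ^ c1)
      = (\<Sum>q=1..p. \<Sum>k'=1..q. 2 * A k' * (Fct 1 cn z1 0 k' * (of_real (Eb q k') / wc q ^ c1)))"
    unfolding sum_divide_distrib by (rule sum.cong) (auto intro!: sum.cong simp: field_simps)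
  also have "\<dots> = (\<Sum>k'=1..p. \<Sum>q=k'..p. 2 * A k' * (Fct 1 cn z1 0 k' * (of_real (Eb q k') / wc q ^ c1)))"
    by (rule sum_swap_tri)
  also have "\<dots> = (\<Sum>k'=1..p. 2 * A k' * (Fct 1 cn z1 0 k' * (\<Sum>q=k'..p. of_real (Eb q k') / wc q ^ c1)))"
    by (simp add: sum_distrib_left)
  also have "\<dots> = (\<Sum>k'=1..p. 2 * A k' * (\<Sum>k=k'..p. of_real (Eb p k) * (Fct 1 c1 z0 0 k * (wc k ^ 2 - z0 ^ 2) / wc k ^ 2) * Fct c1 cn z1 k k'))"
  proof (rule sum.cong)
    fix k' assume "k' \<in> {1..p}"
    then have k': "1 \<le> k'" by auto
    show "2 * A k' * (Fct 1 cn z1 0 k' * (\<Sum>q=k'..p. of_real (Eb q k') / wc q ^ c1)) =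
          2 * A k' * (\<Sum>k=k'..p. of_real (Eb p k) * (Fct 1 c1 z0 0 k * (wc k ^ 2 - z0 ^ 2) / wc k ^ 2) * Fct c1 cn z1 k k')"
      by (simp only: PK[OF c1 z0 k'])
  qed simp
  also have "\<dots> = (\<Sum>k'=1..p. \<Sum>k=k'..p. of_real (Eb p k) * (2 * Fct 1 c1 z0 0 k * (wc k ^ 2 - z0 ^ 2) / wc k ^ 2) * (Fct c1 cn z1 k k' * A k'))"
    unfolding sum_distrib_left by (rule sum.cong) (auto intro!: sum.cong simp: field_simps)
  also have "\<dots> = (\<Sum>k=1..p. \<Sum>k'=1..k. of_real (Eb p k) * (2 * Fct 1 c1 z0 0 k * (wc k ^ 2 - z0 ^ 2) / wc k ^ 2) * (Fct c1 cn z1 k k' * A k'))"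
    by (rule sum_swap_tri[symmetric])
  also have "\<dots> = (\<Sum>k=1..p. of_real (Eb p k) * (2 * Fct 1 c1 z0 0 k * (wc k ^ 2 - z0 ^ 2) / wc k ^ 2
              * (\<Sum>k'=1..k. Fct c1 cn z1 k k' * A k')))"
    by (simp add: sum_distrib_left mult.assoc)
  finally show ?thesis .
qed

lemma BASE_c:
  assumes "1 \<le> p"
  shows "(1::complex) = (\<Sum>k=1..p. of_real (Eb p k) * (-4 * (-1)^k / wc k))"
proof -
  have "(1::complex) = of_real (\<Sum>k=1..p. Eb p k * (-4 * (-1)^k / wr k))"
    using BASE[OF assms] by simp
  then show ?thesis by (simp add: wc_of_real)
qed



definition ccn :: "nat \<Rightarrow> (nat \<Rightarrow> nat) \<Rightarrow> nat" where
  "ccn d c = (if d = 0 then 0 else c 1)"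

primrec Xi :: "nat \<Rightarrow> (nat \<Rightarrow> nat) \<Rightarrow> (nat \<Rightarrow> complex) \<Rightarrow> nat \<Rightarrow> complex" where
  "Xi 0 c z k = 1"
| "Xi (Suc d) c z k = (\<Sum>k'=1..k. Fct (c 1) (ccn d (c \<circ> Suc)) (z 1) k k' * Xi d (c \<circ> Suc) (z \<circ> Suc) k')"

definition Lv :: "nat \<Rightarrow> (nat \<Rightarrow> nat) \<Rightarrow> (nat \<Rightarrow> complex) \<Rightarrow> nat \<Rightarrow> complex" where
  "Lv d c z m = (\<Sum>k=1..m. 2 * of_real (Eb m k) * Fct 1 (ccn d c) (z 0) 0 k * Xi d c z k)"

lemma gidx_0: "gidx 0 c a = replicate (a 0) 2"
  by (simp add: gidx_def)

lemma gidx_Suc: "gidx (Suc d) c a = replicate (a 0) 2 @ (c 1 # gidx d (c \<circ> Suc) (a \<circ> Suc))"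
proof -
  have u: "[1..<Suc (Suc d)] = 1 # map Suc [1..<Suc d]"
    by (simp add: map_Suc_upt upt_conv_Cons del: upt_Suc)
  show ?thesis unfolding gidx_def u by (simp add: o_def del: upt_Suc)
qed

lemma tstar_nonneg: "0 \<le> tstar n s"
proof (induction s arbitrary: n)
  case Nil
  then show ?case by simp
next
  case (Cons x s)
  have *: "0 \<le> tstar k s / (2 * real k - 1) ^ x" if "k \<in> {1..n}" for k
    using that Cons by (intro divide_nonneg_pos) auto
  show ?case using * by (auto intro!: sum_nonneg)
qed

lemma tstar_cons_c:
  "of_real (tstar p (c1 # S)) * \<zeta> = (\<Sum>q=1..p. (of_real (tstar q S) * \<zeta>) / wc q ^ c1)"
  by (simp add: sum_distrib_right sum_divide_distrib wc_of_real wr_def)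

lemma Gterm_Suc:
  "Gterm m (Suc d) c z a = (z 0 ^ 2) ^ (a 0) *
     (of_real (tstar m (replicate (a 0) 2 @ (c 1 # gidx d (c \<circ> Suc) (a \<circ> Suc)))) * (\<Prod>j\<le>d. (z \<circ> Suc) j ^ (2 * (a \<circ> Suc) j)))"
proof -
  have e: "z 0 ^ (2 * a 0) = (z 0 ^ 2) ^ (a 0)" by (simp add: power_mult)
  show ?thesis unfolding Gterm_def gidx_Suc prod.atMost_Suc_shift e by (simp add: algebra_simps)
qed

lemma Gterm_inner:
  "of_real (tstar p (c1 # gidx d c' b)) * (\<Prod>j\<le>d. z' j ^ (2 * b j)) = (\<Sum>q=1..p. Gterm q d c' z' b / wc q ^ c1)"
  unfolding tstar_cons_c Gterm_def ..

lemma norm_Gterm: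
  "norm (Gterm m d c z a) = Re (Gterm m d c (\<lambda>j. of_real (norm (z j))) a)"
proof -
  have e: "of_real (tstar m (gidx d c a)) * (\<Prod>j\<le>d. (of_real (norm (z j)) :: complex) ^ (2 * a j)) = of_real (tstar m (gidx d c a) * (\<Prod>j\<le>d. norm (z j) ^ (2 * a j)))"
    by simp
  show ?thesis unfolding Gterm_def e Re_complex_of_real
    using tstar_nonneg[of m "gidx d c a"] by (simp add: norm_mult prod_norm[symmetric] norm_power)
qed

lemma Fct_lead0: "1 \<le> k \<Longrightarrow> Fct 1 0 zz 0 k = (-2 * (-1)^k / wc k) * wc k ^ 2 / (wc k ^ 2 - zz ^ 2)"
proof -
  assume k: "1 \<le> k"
  have s: "(-1::complex)^(k*(1 + delta 0)) = (-1)^k"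
  proof -
    have e: "k*(1 + delta 0) = k + 2*k" by (simp add: delta_def)
    show ?thesis unfolding e power_add power_mult by simp
  qed
  show ?thesis unfolding Fct_lead[OF k] s by (simp add: delta_def field_simps power2_eq_square)
qed

lemma base_case:
  assumes z: "norm (z 0) < 1" and m: "1 \<le> m"
  shows "(Gterm m 0 c z has_sum Lv 0 c z m) (gexps 0)"
proof -
  let ?\<psi> = "\<lambda>k. -4 * (-1)^k / wc k"
  have u: "\<And>p. 1 \<le> p \<Longrightarrow> (\<lambda>_. 1::complex) p = (\<Sum>k=1..p. of_real (Eb p k) * ?\<psi> k)"
    using BASE_c by simp
  have GL0: "((\<lambda>x. (z 0^2)^x * (Xop ^^ x) (\<lambda>_. 1) m) has_sum
           (\<Sum>k=1..m. of_real (Eb m k) * ?\<psi> k * wc k ^ 2 / (wc k ^ 2 - z 0 ^ 2))) UNIV"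
    by (rule GL[OF z m u])
  have Lv0: "Lv 0 c z m = (\<Sum>k=1..m. 2 * of_real (Eb m k) * Fct 1 0 (z 0) 0 k)"
    by (simp add: Lv_def ccn_def)
  have val: "(\<Sum>k=1..m. of_real (Eb m k) * ?\<psi> k * wc k ^ 2 / (wc k ^ 2 - z 0 ^ 2)) = Lv 0 c z m"
    unfolding Lv0
  proof (rule sum.cong)
    fix k assume "k \<in> {1..m}"
    then have k: "1 \<le> k" by auto
    show "of_real (Eb m k) * ?\<psi> k * wc k ^ 2 / (wc k ^ 2 - z 0 ^ 2) = 2 * of_real (Eb m k) * Fct 1 0 (z 0) 0 k"
      unfolding Fct_lead0[OF k] by (simp add: field_simps)
  qed simp
  have "((\<lambda>x. (z 0^2)^x * (Xop ^^ x) (\<lambda>_. 1) m) has_sum Lv 0 c z m) UNIV"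
    using GL0 unfolding val .
  moreover have "(Gterm m 0 c z has_sum Lv 0 c z m) (gexps 0) =
      ((\<lambda>x. (z 0^2)^x * (Xop ^^ x) (\<lambda>_. 1) m) has_sum Lv 0 c z m) UNIV"
  proof (rule has_sum_reindex_bij_witness[where j="\<lambda>a. a 0" and i="\<lambda>x n. if n = 0 then x else 0"])
    fix a assume "a \<in> gexps 0"
    then show "(\<lambda>n. if n = 0 then a 0 else 0) = a" unfolding gexps_def by (intro ext) auto
  next
    fix a :: "nat \<Rightarrow> nat"
    have t: "of_real (tstar m (replicate (a 0) 2 @ [])) * (1::complex) = (Xop ^^ (a 0)) (\<lambda>p. of_real (tstar p []) * 1) m"
      by (rule tstar_replicate)
    have t2: "(\<lambda>p::nat. (of_real (tstar p []) * 1 :: complex)) = (\<lambda>_. 1)" by simp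
    have t3: "of_real (tstar m (replicate (a 0) 2)) = (Xop ^^ (a 0)) (\<lambda>_. 1) m"
      using t unfolding t2 by simp
    have g: "Gterm m 0 c z a = of_real (tstar m (replicate (a 0) 2)) * z 0 ^ (2 * a 0)"
      unfolding Gterm_def gidx_0 by simp
    show "(z 0^2)^(a 0) * (Xop ^^ (a 0)) (\<lambda>_. 1) m = Gterm m 0 c z a"
      unfolding g t3 power_mult by (rule mult.commute)
  qed (simp_all add: gexps_def)
  ultimately show ?thesis by blast
qed



lemma cancel_aux: "(a::complex) \<noteq> 0 \<Longrightarrow> b \<noteq> 0 \<Longrightarrow> e * (2 * f * a / b * s) * b / a = 2 * e * f * s"
  by (simp add: field_simps)

lemma step_parts:
  assumes IH: "\<And>z' q. (\<forall>j\<le>d. norm (z' j) < 1) \<Longrightarrow> 1 \<le> q \<Longrightarrow>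
                 (Gterm q d (c \<circ> Suc) z' has_sum Lv d (c \<circ> Suc) z' q) (gexps d)"
    and c1: "c 1 = 1 \<or> 3 \<le> c 1"
    and z: "\<forall>j\<le>Suc d. norm (z j) < 1" and m: "1 \<le> m"
  shows "\<exists>g. (\<forall>x. ((\<lambda>b. Gterm m (Suc d) c z (case_nat x b)) has_sum g x) (gexps d))
             \<and> (g has_sum Lv (Suc d) c z m) UNIV"
proof -
  define c' where "c' = c \<circ> Suc"
  define z' where "z' = z \<circ> Suc"
  have z': "\<forall>j\<le>d. norm (z' j) < 1" using z unfolding z'_def by auto
  have z0: "norm (z 0) < 1" using z by auto
  define u where "u p = (\<Sum>q=1..p. Lv d c' z' q / wc q ^ c 1)" for p
  define g where "g x = (z 0 ^ 2) ^ x * (Xop ^^ x) u m" for x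
  define F where "F b p = (\<Sum>q=1..p. Gterm q d c' z' b / wc q ^ c 1)" for b p
  have Fsum: "((\<lambda>b. F b p) has_sum u p) (gexps d)" if "1 \<le> p" for p
    unfolding F_def u_def
    by (rule has_sum_finsum) (auto intro!: has_sum_divide_const IH[OF z'] simp: c'_def)
  have A: "((\<lambda>b. Gterm m (Suc d) c z (case_nat x b)) has_sum g x) (gexps d)" for x
  proof -
    have e: "Gterm m (Suc d) c z (case_nat x b) = (z 0 ^ 2) ^ x * (Xop ^^ x) (F b) m" for b
    proof -
      have s: "(case_nat x b) \<circ> Suc = b" by (rule ext) simp
      have "Gterm m (Suc d) c z (case_nat x b) = (z 0 ^ 2) ^ x *
         (of_real (tstar m (replicate x 2 @ (c 1 # gidx d c' b))) * (\<Prod>j\<le>d. z' j ^ (2 * b j)))"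
        unfolding Gterm_Suc s c'_def z'_def by simp
      also have "\<dots> = (z 0 ^ 2) ^ x * (Xop ^^ x) (\<lambda>p. of_real (tstar p (c 1 # gidx d c' b)) * (\<Prod>j\<le>d. z' j ^ (2 * b j))) m"
        unfolding tstar_replicate ..
      also have "(\<lambda>p. of_real (tstar p (c 1 # gidx d c' b)) * (\<Prod>j\<le>d. z' j ^ (2 * b j))) = F b"
        unfolding F_def Gterm_inner ..
      finally show ?thesis .
    qed
    have "((\<lambda>b. (Xop ^^ x) (F b) m) has_sum (Xop ^^ x) u m) (gexps d)"
      by (rule Xop_has_sum[OF Fsum m])
    then have "((\<lambda>b. (z 0 ^ 2) ^ x * (Xop ^^ x) (F b) m) has_sum g x) (gexps d)"
      unfolding g_def by (rule has_sum_cmult_right)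
    then show ?thesis unfolding e .
  qed
  define \<psi> where "\<psi> k = 2 * Fct 1 (c 1) (z 0) 0 k * (wc k ^ 2 - z 0 ^ 2) / wc k ^ 2
              * (\<Sum>k'=1..k. Fct (c 1) (ccn d c') (z 1) k k' * Xi d c' z' k')" for k
  have uexp: "u p = (\<Sum>k=1..p. of_real (Eb p k) * \<psi> k)" if "1 \<le> p" for p
  proof -
    have "u p = (\<Sum>q=1..p. (\<Sum>k'=1..q. 2 * of_real (Eb q k') * Fct 1 (ccn d c') (z 1) 0 k' * Xi d c' z' k') / wc q ^ c 1)"
      unfolding u_def Lv_def z'_def by simp
    also have "\<dots> = (\<Sum>k=1..p. of_real (Eb p k) * \<psi> k)"
      unfolding \<psi>_def by (rule UEXP[OF c1 z0])
    finally show ?thesis .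
  qed
  have B: "(g has_sum Lv (Suc d) c z m) UNIV"
  proof -
    have "(g has_sum (\<Sum>k=1..m. of_real (Eb m k) * \<psi> k * wc k ^ 2 / (wc k ^ 2 - z 0 ^ 2))) UNIV"
      unfolding g_def by (rule GL[OF z0 m uexp])
    moreover have "(\<Sum>k=1..m. of_real (Eb m k) * \<psi> k * wc k ^ 2 / (wc k ^ 2 - z 0 ^ 2)) = Lv (Suc d) c z m"
      unfolding Lv_def
    proof (rule sum.cong)
      fix k assume "k \<in> {1..m}"
      then have k: "1 \<le> k" by auto
      have nz: "wc k ^ 2 - z 0 ^ 2 \<noteq> 0" by (rule wc_sq_nz[OF z0 k])
      have cc: "ccn (Suc d) c = c 1" by (simp add: ccn_def)
      have X: "Xi (Suc d) c z k = (\<Sum>k'=1..k. Fct (c 1) (ccn d c') (z 1) k k' * Xi d c' z' k')"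
        unfolding c'_def z'_def by simp
      show "of_real (Eb m k) * \<psi> k * wc k ^ 2 / (wc k ^ 2 - z 0 ^ 2) =
            2 * of_real (Eb m k) * Fct 1 (ccn (Suc d) c) (z 0) 0 k * Xi (Suc d) c z k"
        unfolding \<psi>_def cc X by (rule cancel_aux[OF nz]) simp
    qed simp
    ultimately show ?thesis by simp
  qed
  show ?thesis using A B by blast
qed

lemma case_nat_comp_Suc: "(case_nat x b) \<circ> Suc = b"
  by (rule ext) simp

lemma case_nat_0_Suc: "case_nat (a 0) (a \<circ> Suc) = a"
  by (rule ext) (simp split: nat.split)

lemma MAIN:
  "\<forall>c z m. (\<forall>i\<in>{1..d}. 1 \<le> c i \<and> c i \<noteq> 2) \<longrightarrow> (\<forall>j\<le>d. norm (z j) < 1) \<longrightarrow> 1 \<le> m \<longrightarrow>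
      (Gterm m d c z has_sum Lv d c z m) (gexps d)"
proof (induction d)
  case 0
  show ?case
  proof (intro allI impI)
    fix c :: "nat \<Rightarrow> nat" and z :: "nat \<Rightarrow> complex" and m :: nat
    assume "\<forall>j\<le>0. norm (z j) < 1" "1 \<le> m"
    then show "(Gterm m 0 c z has_sum Lv 0 c z m) (gexps 0)" by (intro base_case) auto
  qed
next
  case (Suc d)
  show ?case
  proof (intro allI impI)
    fix c :: "nat \<Rightarrow> nat" and z :: "nat \<Rightarrow> complex" and m :: nat
    assume cc: "\<forall>i\<in>{1..Suc d}. 1 \<le> c i \<and> c i \<noteq> 2" and z: "\<forall>j\<le>Suc d. norm (z j) < 1" and m: "1 \<le> m"
    have "1 \<le> c 1 \<and> c 1 \<noteq> 2" using cc by simp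
    then have c1: "c 1 = 1 \<or> 3 \<le> c 1" by linarith
    have ccS: "\<forall>i\<in>{1..d}. 1 \<le> (c \<circ> Suc) i \<and> (c \<circ> Suc) i \<noteq> 2" using cc by auto
    have IH: "\<And>z' q. (\<forall>j\<le>d. norm (z' j) < 1) \<Longrightarrow> 1 \<le> q \<Longrightarrow>
                 (Gterm q d (c \<circ> Suc) z' has_sum Lv d (c \<circ> Suc) z' q) (gexps d)"
      by (rule Suc.IH[rule_format]) (use ccS in auto)
    define za where "za j = (of_real (norm (z j)) :: complex)" for j
    have za: "\<forall>j\<le>Suc d. norm (za j) < 1" using z unfolding za_def by simp
    obtain g where gA: "\<forall>x. ((\<lambda>b. Gterm m (Suc d) c z (case_nat x b)) has_sum g x) (gexps d)"
      and gB: "(g has_sum Lv (Suc d) c z m) UNIV"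
      using step_parts[OF IH c1 z m] by blast
    obtain g' where gA': "\<forall>x. ((\<lambda>b. Gterm m (Suc d) c za (case_nat x b)) has_sum g' x) (gexps d)"
      and gB': "(g' has_sum Lv (Suc d) c za m) UNIV"
      using step_parts[OF IH c1 za m] by blast
    define fp where "fp xb = Gterm m (Suc d) c z (case_nat (fst xb) (snd xb))" for xb
    have nfp: "norm (fp xb) = Re (Gterm m (Suc d) c za (case_nat (fst xb) (snd xb)))" for xb
      unfolding fp_def za_def by (rule norm_Gterm)
    have "(\<lambda>xb. norm (fp xb)) summable_on (UNIV \<times> gexps d)"
    proof (rule summable_on_SigmaI[where g="\<lambda>x. Re (g' x)"])
      fix x :: nat assume "x \<in> UNIV"
      show "((\<lambda>y. norm (fp (x, y))) has_sum Re (g' x)) (gexps d)"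
        unfolding nfp using has_sum_Re[OF gA'[rule_format, of x]] by simp
    next
      show "(\<lambda>x. Re (g' x)) summable_on UNIV"
        using has_sum_Re[OF gB'] by (rule has_sum_imp_summable)
    qed simp
    then have sfp: "fp summable_on (UNIV \<times> gexps d)"
      by (rule abs_summable_summable)
    have hfp: "(fp has_sum Lv (Suc d) c z m) (UNIV \<times> gexps d)"
    proof (rule has_sum_SigmaI[OF _ gB sfp])
      fix x :: nat assume "x \<in> UNIV"
      show "((\<lambda>y. fp (x, y)) has_sum g x) (gexps d)"
        unfolding fp_def using gA by simp
    qed
    have "(Gterm m (Suc d) c z has_sum Lv (Suc d) c z m) (gexps (Suc d)) = (fp has_sum Lv (Suc d) c z m) (UNIV \<times> gexps d)"
    proof (rule has_sum_reindex_bij_witness[where j="\<lambda>a. (a 0, a \<circ> Suc)" and i="\<lambda>xb. case_nat (fst xb) (snd xb)"])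
      fix a :: "nat \<Rightarrow> nat" assume "a \<in> gexps (Suc d)"
      show "case_nat (fst (a 0, a \<circ> Suc)) (snd (a 0, a \<circ> Suc)) = a" by (simp add: case_nat_0_Suc)
    next
      fix a :: "nat \<Rightarrow> nat" assume "a \<in> gexps (Suc d)"
      then show "(a 0, a \<circ> Suc) \<in> UNIV \<times> gexps d" by (auto simp: gexps_def)
    next
      fix b :: "nat \<times> (nat \<Rightarrow> nat)" assume "b \<in> UNIV \<times> gexps d"
      show "((case_nat (fst b) (snd b)) 0, (case_nat (fst b) (snd b)) \<circ> Suc) = b"
        by (simp add: case_nat_comp_Suc)
    next
      fix b :: "nat \<times> (nat \<Rightarrow> nat)" assume "b \<in> UNIV \<times> gexps d"
      then show "case_nat (fst b) (snd b) \<in> gexps (Suc d)"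
        by (auto simp: gexps_def split: nat.split)
    next
      fix a :: "nat \<Rightarrow> nat" assume "a \<in> gexps (Suc d)"
      show "fp (a 0, a \<circ> Suc) = Gterm m (Suc d) c z a" unfolding fp_def by (simp add: case_nat_0_Suc)
    qed simp
    then show "(Gterm m (Suc d) c z has_sum Lv (Suc d) c z m) (gexps (Suc d))" using hfp by simp
  qed
qed



definition ccg :: "nat \<Rightarrow> nat \<Rightarrow> (nat \<Rightarrow> nat) \<Rightarrow> nat \<Rightarrow> nat" where
  "ccg d cp c j = (if j = 0 then cp else if j = Suc d then 0 else c j)"

definition Prd :: "nat \<Rightarrow> nat \<Rightarrow> (nat \<Rightarrow> nat) \<Rightarrow> (nat \<Rightarrow> complex) \<Rightarrow> nat \<Rightarrow> (nat \<Rightarrow> nat) \<Rightarrow> complex" where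
  "Prd d cp c z kp k = (\<Prod>i\<le>d. Fct (ccg d cp c i) (ccg d cp c (Suc i)) (z i) (if i = 0 then kp else k (i - 1)) (k i))"

lemma chains_le0:
  assumes "k \<in> chains n (Suc d)" "i \<le> Suc d"
  shows "k i \<le> k 0"
  using assms(2)
proof (induction i)
  case 0
  then show ?case by simp
next
  case (Suc i)
  have "k (Suc i) \<le> k i" using assms(1) Suc.prems unfolding chains_def by auto
  then show ?case using Suc by simp
qed

lemma chains_split:
  assumes "k \<in> chains n (Suc d)"
  shows "k 0 \<in> {1..n}" "k \<circ> Suc \<in> chains (k 0) d"
proof -
  show "k 0 \<in> {1..n}" using assms unfolding chains_def by auto
  show "k \<circ> Suc \<in> chains (k 0) d"
    using assms chains_le0[OF assms] unfolding chains_def by auto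
qed

lemma chains_join:
  assumes "k0 \<in> {1..n}" "k' \<in> chains k0 d"
  shows "case_nat k0 k' \<in> chains n (Suc d)"
  using assms unfolding chains_def
  by (auto split: nat.split simp: less_Suc_eq_0_disj)

lemma chains_fin: "finite (chains n d)"
proof (induction d arbitrary: n)
  case 0
  have "chains n 0 \<subseteq> (\<lambda>k0 i. if i = 0 then k0 else 0) ` {1..n}"
  proof
    fix k assume k: "k \<in> chains n 0"
    then have "k = (\<lambda>i. if i = 0 then k 0 else 0)" unfolding chains_def by (intro ext) auto
    moreover have "k 0 \<in> {1..n}" using k unfolding chains_def by auto
    ultimately show "k \<in> (\<lambda>k0 i. if i = 0 then k0 else 0) ` {1..n}" by blast
  qed
  then show ?case by (rule finite_subset) simp
next
  case (Suc d)
  have "chains n (Suc d) \<subseteq> (\<lambda>p. case_nat (fst p) (snd p)) ` (Sigma {1..n} (\<lambda>k0. chains k0 d))"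
  proof
    fix k assume k: "k \<in> chains n (Suc d)"
    have "k = case_nat (k 0) (k \<circ> Suc)" by (rule case_nat_0_Suc[symmetric])
    moreover have "(k 0, k \<circ> Suc) \<in> Sigma {1..n} (\<lambda>k0. chains k0 d)" using chains_split[OF k] by auto
    ultimately show "k \<in> (\<lambda>p. case_nat (fst p) (snd p)) ` (Sigma {1..n} (\<lambda>k0. chains k0 d))"
      by (metis (no_types, lifting) fst_conv image_eqI snd_conv)
  qed
  moreover have "finite (Sigma {1..n} (\<lambda>k0. chains k0 d))" using Suc.IH by auto
  ultimately show ?case by (rule finite_subset[OF _ finite_imageI])
qed

lemma Prd_Suc:
  "Prd (Suc d) cp c z kp (case_nat k0 k') = Fct cp (c 1) (z 0) kp k0 * Prd d (c 1) (c \<circ> Suc) (z \<circ> Suc) k0 k'"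
proof -
  have "Prd (Suc d) cp c z kp (case_nat k0 k') =
     Fct (ccg (Suc d) cp c 0) (ccg (Suc d) cp c 1) (z 0) kp k0 *
     (\<Prod>i\<le>d. Fct (ccg (Suc d) cp c (Suc i)) (ccg (Suc d) cp c (Suc (Suc i))) (z (Suc i)) (case_nat k0 k' i) (k' i))"
    unfolding Prd_def prod.atMost_Suc_shift by (simp split: nat.split)
  also have "\<dots> = Fct cp (c 1) (z 0) kp k0 * Prd d (c 1) (c \<circ> Suc) (z \<circ> Suc) k0 k'"
    unfolding Prd_def
    by (intro arg_cong2[where f="(*)"] prod.cong refl) (auto simp: ccg_def split: nat.split)
  finally show ?thesis .
qed

lemma CD:
  fixes h :: "nat \<Rightarrow> complex"
  shows "(\<Sum>k\<in>chains n d. h (k 0) * Prd d cp c z kp k)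
       = (\<Sum>k0=1..n. h k0 * Fct cp (ccn d c) (z 0) kp k0 * Xi d c z k0)"
proof (induction d arbitrary: n cp c z kp h)
  case 0
  show ?case
  proof -
    show "(\<Sum>k\<in>chains n 0. h (k 0) * Prd 0 cp c z kp k) = (\<Sum>k0=1..n. h k0 * Fct cp (ccn 0 c) (z 0) kp k0 * Xi 0 c z k0)"
    proof (rule sum.reindex_bij_witness[where j="\<lambda>k. k 0" and i="\<lambda>k0 i. if i = 0 then k0 else 0"])
      fix k assume "k \<in> chains n 0"
      then show "(\<lambda>i. if i = 0 then k 0 else 0) = k" unfolding chains_def by (intro ext) auto
    next
      fix k assume "k \<in> chains n 0"
      then show "k 0 \<in> {1..n}" unfolding chains_def by auto
    next
      fix k0 assume "k0 \<in> {1..n}"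
      then show "(\<lambda>i. if i = 0 then k0 else 0) \<in> chains n 0" unfolding chains_def by auto
    next
      fix k assume "k \<in> chains n 0"
      show "h (k 0) * Fct cp (ccn 0 c) (z 0) kp (k 0) * Xi 0 c z (k 0) = h (k 0) * Prd 0 cp c z kp k"
        by (simp add: Prd_def ccg_def ccn_def)
    qed simp
  qed
next
  case (Suc d)
  show ?case
  proof -
    have "(\<Sum>k\<in>chains n (Suc d). h (k 0) * Prd (Suc d) cp c z kp k)
        = (\<Sum>p\<in>Sigma {1..n} (\<lambda>k0. chains k0 d). h (fst p) * Prd (Suc d) cp c z kp (case_nat (fst p) (snd p)))"
    proof (rule sum.reindex_bij_witness[where j="\<lambda>k. (k 0, k \<circ> Suc)" and i="\<lambda>p. case_nat (fst p) (snd p)"])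
      fix k assume "k \<in> chains n (Suc d)"
      show "case_nat (fst (k 0, k \<circ> Suc)) (snd (k 0, k \<circ> Suc)) = k" by (simp add: case_nat_0_Suc)
    next
      fix k assume k: "k \<in> chains n (Suc d)"
      show "(k 0, k \<circ> Suc) \<in> Sigma {1..n} (\<lambda>k0. chains k0 d)" using chains_split[OF k] by auto
    next
      fix p :: "nat \<times> (nat \<Rightarrow> nat)" assume "p \<in> Sigma {1..n} (\<lambda>k0. chains k0 d)"
      show "((case_nat (fst p) (snd p)) 0, case_nat (fst p) (snd p) \<circ> Suc) = p"
        by (simp add: case_nat_comp_Suc)
    next
      fix p :: "nat \<times> (nat \<Rightarrow> nat)" assume "p \<in> Sigma {1..n} (\<lambda>k0. chains k0 d)"
      then show "case_nat (fst p) (snd p) \<in> chains n (Suc d)" by (intro chains_join) auto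
    next
      fix k assume "k \<in> chains n (Suc d)"
      show "h (fst (k 0, k \<circ> Suc)) * Prd (Suc d) cp c z kp (case_nat (fst (k 0, k \<circ> Suc)) (snd (k 0, k \<circ> Suc)))
          = h (k 0) * Prd (Suc d) cp c z kp k" by (simp add: case_nat_0_Suc)
    qed
    also have "\<dots> = (\<Sum>k0=1..n. \<Sum>k'\<in>chains k0 d. h k0 * (Fct cp (c 1) (z 0) kp k0 * Prd d (c 1) (c \<circ> Suc) (z \<circ> Suc) k0 k'))"
      by (subst sum.Sigma) (auto simp: chains_fin Prd_Suc split_beta)
    also have "\<dots> = (\<Sum>k0=1..n. h k0 * Fct cp (c 1) (z 0) kp k0 * (\<Sum>k'\<in>chains k0 d. Prd d (c 1) (c \<circ> Suc) (z \<circ> Suc) k0 k'))"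
      by (simp add: sum_distrib_left mult.assoc)
    also have "\<dots> = (\<Sum>k0=1..n. h k0 * Fct cp (ccn (Suc d) c) (z 0) kp k0 * Xi (Suc d) c z k0)"
    proof (rule sum.cong)
      fix k0 assume "k0 \<in> {1..n}"
      have e: "(\<Sum>k'\<in>chains k0 d. (\<lambda>_. 1::complex) (k' 0) * Prd d (c 1) (c \<circ> Suc) (z \<circ> Suc) k0 k')
          = (\<Sum>k1=1..k0. (\<lambda>_. 1::complex) k1 * Fct (c 1) (ccn d (c \<circ> Suc)) ((z \<circ> Suc) 0) k0 k1 * Xi d (c \<circ> Suc) (z \<circ> Suc) k1)"
        by (rule Suc.IH[where n=k0 and cp="c 1" and c="c \<circ> Suc" and z="z \<circ> Suc" and kp=k0 and h="\<lambda>_. 1"])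
      show "h k0 * Fct cp (c 1) (z 0) kp k0 * (\<Sum>k'\<in>chains k0 d. Prd d (c 1) (c \<circ> Suc) (z \<circ> Suc) k0 k')
          = h k0 * Fct cp (ccn (Suc d) c) (z 0) kp k0 * Xi (Suc d) c z k0"
        using e by (simp add: ccn_def)
    qed simp
    finally show "(\<Sum>k\<in>chains n (Suc d). h (k 0) * Prd (Suc d) cp c z kp k) = (\<Sum>k0=1..n. h k0 * Fct cp (ccn (Suc d) c) (z 0) kp k0 * Xi (Suc d) c z k0)" .
  qed
qed

lemma const_eq:
  assumes "1 \<le> n"
  shows "real n * real (2 * n choose n) / 2 ^ (4 * n - 2) = 2 * rho n"
proof -
  have "(2::real) ^ (4 * n - 2) * 4 = 16 ^ n"
  proof -
    have "(2::real) ^ (4 * n - 2) * 4 = 2 ^ (4 * n - 2 + 2)" by (simp add: power_add)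
    also have "4 * n - 2 + 2 = 4 * n" using assms by simp
    finally show ?thesis by (simp add: power_mult)
  qed
  then show ?thesis unfolding rho_def by (simp add: field_simps)
qed



theorem theorem2p1:
  fixes n d :: nat and c :: "nat \<Rightarrow> nat" and z :: "nat \<Rightarrow> complex"
  assumes "n \<ge> 1"
    and "\<forall>i\<in>{1..d}. c i \<ge> 1 \<and> c i \<noteq> 2"
    and "\<forall>j\<le>d. norm (z j) < 1"
  shows "Gterm n d c z summable_on gexps d
    \<and> G n d c z =
      of_real (real n * real (2 * n choose n) / 2 ^ (4 * n - 2)) *
      (\<Sum>k\<in>chains n d.
         of_real (real ((2 * n - 1) choose (n - k 0))) *
         (\<Prod>i\<le>d.
            (let cc = (\<lambda>j. if j = 0 then 1 else if j = Suc d then 0 else c j);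
                 \<delta> = delta (cc i) + delta (cc (Suc i));
                 kp = (if i = 0 then 0 else k (i - 1));
                 w = 2 * of_nat (k i) - (1::complex)
             in (- 1) ^ (k i * \<delta>) * w powi (int \<delta> - 1) / (w ^ 2 - z i ^ 2)
                * of_real (Vsharp kp (k i) (replicate (cc i - 3) 1)))))"
proof -
  have hs: "(Gterm n d c z has_sum Lv d c z n) (gexps d)"
    using MAIN[of d] assms by blast
  have prodeq: "(\<Prod>i\<le>d.
            (let cc = (\<lambda>j. if j = 0 then 1 else if j = Suc d then 0 else c j);
                 \<delta> = delta (cc i) + delta (cc (Suc i));
                 kp = (if i = 0 then 0 else k (i - 1));
                 w = 2 * of_nat (k i) - (1::complex)
             in (- 1) ^ (k i * \<delta>) * w powi (int \<delta> - 1) / (w ^ 2 - z i ^ 2)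
                * of_real (Vsharp kp (k i) (replicate (cc i - 3) 1)))) = Prd d 1 c z 0 k" for k
    unfolding Prd_def Fct_def ccg_def Let_def by (rule refl)
  have S: "(\<Sum>k\<in>chains n d.
         of_real (real ((2 * n - 1) choose (n - k 0))) *
         (\<Prod>i\<le>d.
            (let cc = (\<lambda>j. if j = 0 then 1 else if j = Suc d then 0 else c j);
                 \<delta> = delta (cc i) + delta (cc (Suc i));
                 kp = (if i = 0 then 0 else k (i - 1));
                 w = 2 * of_nat (k i) - (1::complex)
             in (- 1) ^ (k i * \<delta>) * w powi (int \<delta> - 1) / (w ^ 2 - z i ^ 2)
                * of_real (Vsharp kp (k i) (replicate (cc i - 3) 1)))))
      = (\<Sum>k0=1..n. of_real (real ((2 * n - 1) choose (n - k0))) * Fct 1 (ccn d c) (z 0) 0 k0 * Xi d c z k0)"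
    unfolding prodeq by (rule CD)
  have L: "of_real (real n * real (2 * n choose n) / 2 ^ (4 * n - 2)) *
      (\<Sum>k0=1..n. of_real (real ((2 * n - 1) choose (n - k0))) * Fct 1 (ccn d c) (z 0) 0 k0 * Xi d c z k0)
      = Lv d c z n"
    unfolding Lv_def sum_distrib_left
  proof (rule sum.cong)
    fix k0 assume "k0 \<in> {1..n}"
    have "of_real (real n * real (2 * n choose n) / 2 ^ (4 * n - 2)) * (of_real (real ((2 * n - 1) choose (n - k0))) :: complex)
        = 2 * of_real (Eb n k0)"
      unfolding const_eq[OF assms(1)] Eb_def by simp
    then show "of_real (real n * real (2 * n choose n) / 2 ^ (4 * n - 2)) *
        (of_real (real ((2 * n - 1) choose (n - k0))) * Fct 1 (ccn d c) (z 0) 0 k0 * Xi d c z k0) =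
        2 * of_real (Eb n k0) * Fct 1 (ccn d c) (z 0) 0 k0 * Xi d c z k0"
      by (simp add: mult.assoc[symmetric])
  qed simp
  have sm: "Gterm n d c z summable_on gexps d" using hs by (rule has_sum_imp_summable)
  have eq: "G n d c z = Lv d c z n" unfolding G_def using hs by (rule infsumI)
  show ?thesis unfolding S L using sm eq by blast
qed


end
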